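(* Let $1\le k\le n$. The image of the map $P\Lambda^{n-k,k}\to\mathcal{P}((\mathbb{C}^n)^k)$, $\tau\mapsto Q_\tau$, coincides with $\mathcal{M}^2_k$.
   Context: On $\mathbb{R}^n\times(\mathbb{R}^n)^*$ with coordinates $(x,y)$ and symplectic form $\omega_s=\sum_i dx_i\wedge dy_i$, $\Lambda^{n-k,k}$ is the space of constant complex $n$-forms spanned by $dx_I\wedge dy_J$ with $|I|=n-k$, $|J|=k$, and $P\Lambda^{n-k,k}=\{\tau:\omega_s\wedge\tau=0\}$. For $w_1,\dots,w_k\in\mathbb{C}^n$ let $X_j=\langle w_j,x\rangle\sum_{l=1}^n w_{j,l}\frac{\partial}{\partial y_l}$ (bilinear pairing $\langle w,x\rangle=\sum_l w_lx_l$); $Q_\tau$ is the polynomial on $(\mathbb{C}^n)^k$ with $Q_\tau(w_1,\dots,w_k)\,dx_1\wedge\dots\wedge dx_n=\mathcal{L}_{X_1}\cdots\mathcal{L}_{X_k}\tau$ ($\mathbb{C}$-linear Lie derivative). $\mathcal{M}^2_k$ is the subspace of polynomials on $(\mathbb{C}^n)^k$ spanned by products $\Delta_\alpha\Delta_\beta$ of two $(k\times k)$-minors of the $n\times k$ matrix with columns $w_1,\dots,w_k$. *)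

theory Defs
  imports "HOL-Combinatorics.Permutations" Complex_Main
begin

text \<open>Coordinates on R^n x (R^n)^*: index i < n stands for x_i, index n + i stands for y_i.
  A constant complex m-form tau on R^{2n} is represented by its values on tuples of standard
  basis vectors: tau f = tau(e_{f 0}, ..., e_{f (m-1)}) (f :: nat => nat, indices < 2n).\<close>

type_synonym cform = "(nat \<Rightarrow> nat) \<Rightarrow> complex"

text \<open>dz_{s_0} wedge ... wedge dz_{s_{m-1}} evaluated on (e_{f 0},...,e_{f(m-1)}): a determinant.\<close>
definition basic_form :: "nat \<Rightarrow> nat list \<Rightarrow> cform" where
  "basic_form m s f = (\<Sum>\<sigma> | \<sigma> permutes {0..<m}.
       of_int (sign \<sigma>) * (\<Prod>a<m. if f (\<sigma> a) = s ! a then 1 else 0))"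

definition dxdy :: "nat \<Rightarrow> nat set \<Rightarrow> nat set \<Rightarrow> cform" where
  "dxdy n I J = basic_form n (sorted_list_of_set I @ map (\<lambda>j. n + j) (sorted_list_of_set J))"

definition Lambda :: "nat \<Rightarrow> nat \<Rightarrow> cform set" where
  "Lambda n k = {\<tau>. \<exists>c :: nat set \<times> nat set \<Rightarrow> complex.
      \<tau> = (\<lambda>f. \<Sum>(I, J) \<in> {(I, J). I \<subseteq> {0..<n} \<and> J \<subseteq> {0..<n} \<and> card I = n - k \<and> card J = k}.
                c (I, J) * dxdy n I J f)}"

definition wedge :: "nat \<Rightarrow> nat \<Rightarrow> cform \<Rightarrow> cform \<Rightarrow> cform" where
  "wedge p q \<alpha> \<beta> f = (1 / (of_nat (fact p * fact q))) *
     (\<Sum>\<sigma> | \<sigma> permutes {0..<p + q}.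
        of_int (sign \<sigma>) * \<alpha> (f \<circ> \<sigma>) * \<beta> (\<lambda>i. f (\<sigma> (i + p))))"

text \<open>The symplectic form omega_s = sum_i dx_i wedge dy_i.\<close>
definition omega_s :: "nat \<Rightarrow> cform" where
  "omega_s n f = (if f 0 < n \<and> f 1 = f 0 + n then 1
                  else if f 1 < n \<and> f 0 = f 1 + n then -1 else 0)"

definition PLambda :: "nat \<Rightarrow> nat \<Rightarrow> cform set" where
  "PLambda n k = {\<tau> \<in> Lambda n k.
      \<forall>f. (\<forall>b < n + 2. f b < 2 * n) \<longrightarrow> wedge 2 n (omega_s n) \<tau> f = 0}"

text \<open>C-linear Lie derivative of a constant m-form along the linear vector field
  X(z) = A z (A t s = coefficient of dz_s in the t-th component of X):
  (L_X tau)(v_1,...,v_m) = sum_i tau(v_1,...,A v_i,...,v_m).\<close>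
definition lie_lin :: "nat \<Rightarrow> nat \<Rightarrow> (nat \<Rightarrow> nat \<Rightarrow> complex) \<Rightarrow> cform \<Rightarrow> cform" where
  "lie_lin n m A \<tau> f = (\<Sum>i<m. \<Sum>t<2 * n. A t (f i) * \<tau> (f(i := t)))"

text \<open>Matrix of the vector field X_w = <w,x> sum_l w_l d/dy_l:
  the y_l-component is w_l * sum_s w_s x_s.\<close>
definition Xmat :: "nat \<Rightarrow> (nat \<Rightarrow> complex) \<Rightarrow> nat \<Rightarrow> nat \<Rightarrow> complex" where
  "Xmat n w t s = (if n \<le> t \<and> t < 2 * n \<and> s < n then w (t - n) * w s else 0)"

text \<open>Q_tau(w_1,...,w_k): W j l is the l-th coordinate of w_{j+1}.
  L_{X_1} ... L_{X_k} tau is evaluated on (e_{x_1},...,e_{x_n}), i.e. the coefficient of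
  dx_1 wedge ... wedge dx_n.\<close>
definition Q_tau :: "nat \<Rightarrow> nat \<Rightarrow> cform \<Rightarrow> (nat \<Rightarrow> nat \<Rightarrow> complex) \<Rightarrow> complex" where
  "Q_tau n k \<tau> W = foldr (\<lambda>j \<sigma>. lie_lin n n (Xmat n (W j)) \<sigma>) [0..<k] \<tau> (\<lambda>i. i)"

definition minor :: "nat \<Rightarrow> (nat \<Rightarrow> nat \<Rightarrow> complex) \<Rightarrow> nat set \<Rightarrow> complex" where
  "minor k W \<alpha> = (\<Sum>\<sigma> | \<sigma> permutes {0..<k}.
      of_int (sign \<sigma>) * (\<Prod>a<k. W (\<sigma> a) (sorted_list_of_set \<alpha> ! a)))"

definition M2 :: "nat \<Rightarrow> nat \<Rightarrow> ((nat \<Rightarrow> nat \<Rightarrow> complex) \<Rightarrow> complex) set" where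
  "M2 n k = {Q. \<exists>c :: nat set \<times> nat set \<Rightarrow> complex.
      Q = (\<lambda>W. \<Sum>(\<alpha>, \<beta>) \<in> {(\<alpha>, \<beta>). \<alpha> \<subseteq> {0..<n} \<and> \<beta> \<subseteq> {0..<n} \<and> card \<alpha> = k \<and> card \<beta> = k}.
                c (\<alpha>, \<beta>) * minor k W \<alpha> * minor k W \<beta>)}"

end

theory Submission
  imports Defs
begin

lemma perm_sign_pm: "of_int (sign p) * (of_int (sign p) :: complex) = 1"
  by (metis of_int_1 of_int_mult sign_idempotent)

lemma bf_compose:
  assumes "\<pi> permutes {0..<m}"
  shows "basic_form m s (f \<circ> \<pi>) = of_int (sign \<pi>) * basic_form m s f"
proof -
  have pp: "permutation \<pi>" using assms permutes_imp_permutation by blast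
  have "basic_form m s (f \<circ> \<pi>) = (\<Sum>\<sigma> | \<sigma> permutes {0..<m}.
       of_int (sign \<sigma>) * (\<Prod>a<m. if f (\<pi> (\<sigma> a)) = s ! a then 1 else 0))"
    by (simp add: basic_form_def)
  also have "\<dots> = (\<Sum>\<sigma> | \<sigma> permutes {0..<m}.
       of_int (sign (inv \<pi> \<circ> \<sigma>)) * (\<Prod>a<m. if f (\<pi> ((inv \<pi> \<circ> \<sigma>) a)) = s ! a then 1 else 0))"
    by (rule setum_permutations_compose_left[OF permutes_inv[OF assms]])
  also have "\<dots> = (\<Sum>\<sigma> | \<sigma> permutes {0..<m}.
       of_int (sign \<pi>) * (of_int (sign \<sigma>) * (\<Prod>a<m. if f (\<sigma> a) = s ! a then 1 else 0)))"
  proof (rule sum.cong[OF refl])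
    fix \<sigma> assume "\<sigma> \<in> {\<sigma>. \<sigma> permutes {0..<m}}"
    then have ps: "permutation \<sigma>" using permutes_imp_permutation by blast
    have "sign (inv \<pi> \<circ> \<sigma>) = sign \<pi> * sign \<sigma>"
      by (simp add: sign_compose sign_inverse pp ps permutation_inverse)
    moreover have "\<And>a. \<pi> ((inv \<pi> \<circ> \<sigma>) a) = \<sigma> a"
      using permutes_inverses(1)[OF assms] by simp
    ultimately show "of_int (sign (inv \<pi> \<circ> \<sigma>)) * (\<Prod>a<m. if f (\<pi> ((inv \<pi> \<circ> \<sigma>) a)) = s ! a then 1 else 0)
       = of_int (sign \<pi>) * (of_int (sign \<sigma>) * (\<Prod>a<m. if f (\<sigma> a) = s ! a then 1 else (0::complex)))"
      by simp
  qed
  also have "\<dots> = of_int (sign \<pi>) * basic_form m s f"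
    by (simp add: basic_form_def sum_distrib_left)
  finally show ?thesis .
qed

lemma bf_permute:
  assumes "\<pi> permutes {0..<m}" "\<And>a. a < m \<Longrightarrow> s' ! a = s ! (\<pi> a)"
  shows "basic_form m s' f = of_int (sign \<pi>) * basic_form m s f"
proof -
  have pp: "permutation \<pi>" using assms permutes_imp_permutation by blast
  have bij: "bij_betw \<pi> {..<m} {..<m}"
    using assms(1) permutes_imp_bij atLeast0LessThan by metis
  have "basic_form m s' f = (\<Sum>\<sigma> | \<sigma> permutes {0..<m}.
       of_int (sign \<sigma>) * (\<Prod>a<m. if f (\<sigma> a) = s ! (\<pi> a) then 1 else 0))"
    by (simp add: basic_form_def assms(2))
  also have "\<dots> = (\<Sum>\<sigma> | \<sigma> permutes {0..<m}.
       of_int (sign \<sigma>) * (\<Prod>b<m. if f (\<sigma> (inv \<pi> b)) = s ! b then 1 else 0))"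
  proof (rule sum.cong[OF refl])
    fix \<sigma>
    have "(\<Prod>a<m. if f (\<sigma> a) = s ! (\<pi> a) then 1 else (0::complex))
        = (\<Prod>b\<in>\<pi> ` {..<m}. if f (\<sigma> (inv \<pi> b)) = s ! b then 1 else 0)"
      by (subst prod.reindex) (use bij bij_betw_def permutes_inverses(2)[OF assms(1)] in auto)
    also have "\<dots> = (\<Prod>b<m. if f (\<sigma> (inv \<pi> b)) = s ! b then 1 else 0)"
      using bij by (simp add: bij_betw_def)
    finally show "of_int (sign \<sigma>) * (\<Prod>a<m. if f (\<sigma> a) = s ! (\<pi> a) then 1 else 0) =
         of_int (sign \<sigma>) * (\<Prod>b<m. if f (\<sigma> (inv \<pi> b)) = s ! b then 1 else (0::complex))" by simp
  qed
  also have "\<dots> = (\<Sum>\<sigma> | \<sigma> permutes {0..<m}.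
       of_int (sign (\<sigma> \<circ> \<pi>)) * (\<Prod>b<m. if f ((\<sigma> \<circ> \<pi>) (inv \<pi> b)) = s ! b then 1 else 0))"
    by (rule sum_permutations_compose_right[OF assms(1)])
  also have "\<dots> = (\<Sum>\<sigma> | \<sigma> permutes {0..<m}.
       of_int (sign \<pi>) * (of_int (sign \<sigma>) * (\<Prod>b<m. if f (\<sigma> b) = s ! b then 1 else 0)))"
  proof (rule sum.cong[OF refl])
    fix \<sigma> assume "\<sigma> \<in> {\<sigma>. \<sigma> permutes {0..<m}}"
    then have ps: "permutation \<sigma>" using permutes_imp_permutation by blast
    have "sign (\<sigma> \<circ> \<pi>) = sign \<pi> * sign \<sigma>"
      by (simp add: sign_compose pp ps)
    moreover have "\<And>b. (\<sigma> \<circ> \<pi>) (inv \<pi> b) = \<sigma> b"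
      using permutes_inverses(1)[OF assms(1)] by simp
    ultimately show "of_int (sign (\<sigma> \<circ> \<pi>)) * (\<Prod>b<m. if f ((\<sigma> \<circ> \<pi>) (inv \<pi> b)) = s ! b then 1 else 0)
       = of_int (sign \<pi>) * (of_int (sign \<sigma>) * (\<Prod>b<m. if f (\<sigma> b) = s ! b then 1 else (0::complex)))"
      by simp
  qed
  also have "\<dots> = of_int (sign \<pi>) * basic_form m s f"
    by (simp add: basic_form_def sum_distrib_left)
  finally show ?thesis .
qed

lemma bf_swap_adj:
  assumes "length P + 2 \<le> m"
  shows "basic_form m (P @ a # b # R) f = - basic_form m (P @ b # a # R) f"
proof -
  let ?p = "length P"
  have tp: "Transposition.transpose ?p (Suc ?p) permutes {0..<m}"
    by (rule permutes_swap_id) (use assms in auto)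
  have "basic_form m (P @ a # b # R) f
     = of_int (sign (Transposition.transpose ?p (Suc ?p))) * basic_form m (P @ b # a # R) f"
  proof (rule bf_permute[OF tp])
    fix x assume "x < m"
    show "(P @ a # b # R) ! x = (P @ b # a # R) ! Transposition.transpose ?p (Suc ?p) x"
      by (cases "x < ?p"; cases "x = ?p"; cases "x = Suc ?p")
         (auto simp: nth_append Transposition.transpose_def nth_Cons split: nat.splits)
  qed
  then show ?thesis by (simp add: sign_swap_id)
qed

lemma bf_repeat:
  assumes "a < m" "b < m" "a \<noteq> b" "s ! a = s ! b"
  shows "basic_form m s f = 0"
proof -
  have tp: "Transposition.transpose a b permutes {0..<m}"
    by (rule permutes_swap_id) (use assms in auto)
  have "basic_form m s f = of_int (sign (Transposition.transpose a b)) * basic_form m s f"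
    by (rule bf_permute[OF tp]) (use assms in \<open>auto simp: Transposition.transpose_def\<close>)
  then show ?thesis using assms by (simp add: sign_swap_id)
qed

lemma bf_move_pair:
  assumes "length (P @ pre @ x # y # R) \<le> m"
  shows "basic_form m (P @ pre @ x # y # R) f = basic_form m (P @ x # y # pre @ R) f"
  using assms
proof (induction pre arbitrary: P)
  case Nil
  then show ?case by simp
next
  case (Cons z pre)
  have "basic_form m (P @ (z # pre) @ x # y # R) f = basic_form m ((P @ [z]) @ pre @ x # y # R) f"
    by simp
  also have "\<dots> = basic_form m ((P @ [z]) @ x # y # pre @ R) f"
    by (rule Cons.IH) (use Cons.prems in simp)
  also have "\<dots> = basic_form m (P @ z # x # y # (pre @ R)) f" by simp
  also have "\<dots> = - basic_form m (P @ x # z # y # (pre @ R)) f"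
    by (rule bf_swap_adj) (use Cons.prems in simp)
  also have "basic_form m (P @ x # z # y # (pre @ R)) f = basic_form m ((P @ [x]) @ z # y # (pre @ R)) f"
    by simp
  also have "\<dots> = - basic_form m ((P @ [x]) @ y # z # (pre @ R)) f"
    by (rule bf_swap_adj) (use Cons.prems in simp)
  finally show ?case by simp
qed


definition idx :: "'a list \<Rightarrow> 'a \<Rightarrow> nat" where
  "idx xs x = (THE i. i < length xs \<and> xs ! i = x)"

lemma idx_nth:
  assumes "distinct xs" "i < length xs"
  shows "idx xs (xs ! i) = i"
  unfolding idx_def
  by (rule the_equality) (use assms nth_eq_iff_index_eq in auto)

lemma idx_in:
  assumes "distinct xs" "x \<in> set xs"
  shows "idx xs x < length xs" "xs ! idx xs x = x"
proof -
  obtain i where "i < length xs" "xs ! i = x" using assms(2) by (auto simp: in_set_conv_nth)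
  then show "idx xs x < length xs" "xs ! idx xs x = x" using idx_nth[OF assms(1)] by auto
qed

lemma bf_dup_zero:
  assumes "length (x # y # L) \<le> m" "x \<in> set L \<or> y \<in> set L"
  shows "basic_form m (x # y # L) f = 0"
  using assms(2)
proof
  assume "x \<in> set L"
  then obtain j where j: "j < length L" "L ! j = x" by (auto simp: in_set_conv_nth)
  show ?thesis by (rule bf_repeat[of 0 m "j+2"]) (use assms(1) j in auto)
next
  assume "y \<in> set L"
  then obtain j where j: "j < length L" "L ! j = y" by (auto simp: in_set_conv_nth)
  show ?thesis by (rule bf_repeat[of 1 m "j+2"]) (use assms(1) j in auto)
qed

lemma bf_local:
  assumes "\<And>a. a < m \<Longrightarrow> f a = g a"
  shows "basic_form m s f = basic_form m s g"
  unfolding basic_form_def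
proof (rule sum.cong[OF refl])
  fix \<sigma> assume "\<sigma> \<in> {\<sigma>. \<sigma> permutes {0..<m}}"
  then have "\<And>a. a < m \<Longrightarrow> \<sigma> a < m" using permutes_in_image by fastforce
  then show "of_int (sign \<sigma>) * (\<Prod>a<m. if f (\<sigma> a) = s ! a then 1 else 0) =
         of_int (sign \<sigma>) * (\<Prod>a<m. if g (\<sigma> a) = s ! a then 1 else 0)"
    using assms by (intro arg_cong2[where f="(*)"] prod.cong) auto
qed

lemma bf_support:
  assumes "basic_form m s f \<noteq> 0" "length s = m"
  shows "f ` {..<m} = set s"
proof -
  obtain \<sigma> where s: "\<sigma> permutes {0..<m}" "(\<Prod>a<m. if f (\<sigma> a) = s ! a then 1 else 0) \<noteq> (0::complex)"
  proof -
    from assms(1) obtain \<sigma> where "\<sigma> \<in> {\<sigma>. \<sigma> permutes {0..<m}}"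
      "of_int (sign \<sigma>) * (\<Prod>a<m. if f (\<sigma> a) = s ! a then 1 else 0) \<noteq> (0::complex)"
      unfolding basic_form_def using sum.not_neutral_contains_not_neutral by blast
    then show ?thesis using that by auto
  qed
  have eq: "\<And>a. a < m \<Longrightarrow> f (\<sigma> a) = s ! a"
  proof (rule ccontr)
    fix a assume "a < m" "f (\<sigma> a) \<noteq> s ! a"
    then have "(\<Prod>a<m. if f (\<sigma> a) = s ! a then 1 else 0) = (0::complex)"
      by (intro prod_zero) auto
    then show False using s(2) by simp
  qed
  have img: "\<sigma> ` {..<m} = {..<m}" using permutes_image[OF s(1)] by (simp add: atLeast0LessThan)
  have "f ` {..<m} = f ` \<sigma> ` {..<m}" using img by simp
  also have "\<dots> = (\<lambda>a. s ! a) ` {..<m}" using eq by (auto simp: image_iff)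
  also have "\<dots> = set s" using assms(2) by (auto simp: in_set_conv_nth)
  finally show ?thesis .
qed

lemma bf_nonzero:
  assumes "inj_on f {..<m}" "f ` {..<m} = set s" "distinct s" "length s = m"
  shows "basic_form m s f \<noteq> 0"
proof -
  define \<sigma> where "\<sigma> a = (if a < m then inv_into {..<m} f (s ! a) else a)" for a
  have into: "\<And>a. a < m \<Longrightarrow> \<sigma> a < m"
  proof -
    fix a assume a: "a < m"
    then have "s ! a \<in> f ` {..<m}" using assms(2,4) by (simp add: nth_mem)
    then have "inv_into {..<m} f (s ! a) \<in> {..<m}" by (rule inv_into_into)
    then show "\<sigma> a < m" using a unfolding \<sigma>_def by simp
  qed
  have fs: "\<And>a. a < m \<Longrightarrow> f (\<sigma> a) = s ! a"
    unfolding \<sigma>_def using assms(2,4) by (auto intro!: f_inv_into_f simp: nth_mem)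
  have inj: "inj_on \<sigma> {..<m}"
  proof (rule inj_onI)
    fix a b assume "a \<in> {..<m}" "b \<in> {..<m}" "\<sigma> a = \<sigma> b"
    then have "s ! a = s ! b" using fs by (metis lessThan_iff)
    then show "a = b" using assms(3,4) \<open>a \<in> {..<m}\<close> \<open>b \<in> {..<m}\<close> nth_eq_iff_index_eq by auto
  qed
  have "\<sigma> ` {..<m} \<subseteq> {..<m}" using into by auto
  then have "\<sigma> ` {..<m} = {..<m}"
    using inj by (meson card_image card_subset_eq finite_lessThan)
  then have bij: "bij_betw \<sigma> {..<m} {..<m}" using inj by (simp add: bij_betw_def)
  have sp: "\<sigma> permutes {0..<m}"
    by (rule bij_imp_permutes) (use bij in \<open>auto simp: \<sigma>_def atLeast0LessThan\<close>)
  have "basic_form m s f = (\<Sum>\<tau> | \<tau> permutes {0..<m}. of_int (sign \<tau>) * (if \<tau> = \<sigma> then 1 else 0))"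
    unfolding basic_form_def
  proof (rule sum.cong[OF refl])
    fix \<tau> assume "\<tau> \<in> {\<tau>. \<tau> permutes {0..<m}}"
    then have tp: "\<tau> permutes {0..<m}" by simp
    have tin: "\<And>a. a < m \<Longrightarrow> \<tau> a < m" using tp permutes_in_image by fastforce
    have "(\<Prod>a<m. if f (\<tau> a) = s ! a then 1 else (0::complex)) = (if \<tau> = \<sigma> then 1 else 0)"
    proof (cases "\<forall>a<m. f (\<tau> a) = s ! a")
      case True
      have "\<tau> = \<sigma>"
      proof
        fix a show "\<tau> a = \<sigma> a"
        proof (cases "a < m")
          case True
          have "f (\<tau> a) = f (\<sigma> a)" using \<open>\<forall>a<m. f (\<tau> a) = s ! a\<close> fs True by simp
          moreover have "\<tau> a \<in> {..<m}" "\<sigma> a \<in> {..<m}" using tin into True by auto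
          ultimately show ?thesis using assms(1) by (simp add: inj_on_eq_iff)
        next
          case False
          then show ?thesis using permutes_not_in[OF tp] permutes_not_in[OF sp] by auto
        qed
      qed
      then show ?thesis using True by simp
    next
      case False
      then obtain a where "a < m" "f (\<tau> a) \<noteq> s ! a" by auto
      then have "(\<Prod>a<m. if f (\<tau> a) = s ! a then 1 else (0::complex)) = 0"
        by (intro prod_zero) auto
      moreover have "\<tau> \<noteq> \<sigma>" using False fs by auto
      ultimately show ?thesis by simp
    qed
    then show "of_int (sign \<tau>) * (\<Prod>a<m. if f (\<tau> a) = s ! a then 1 else 0) =
         of_int (sign \<tau>) * (if \<tau> = \<sigma> then 1 else (0::complex))" by simp
  qed
  also have "\<dots> = (\<Sum>\<tau> | \<tau> permutes {0..<m}. if \<tau> = \<sigma> then of_int (sign \<sigma>) else 0)"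
    by (rule sum.cong) auto
  also have "\<dots> = of_int (sign \<sigma>)"
    using sp by (subst sum.delta[OF finite_permutations]) auto
  finally show ?thesis by simp
qed

lemma bf_rearrange:
  assumes "distinct s" "distinct s'" "set s = set s'" "length s = m"
  shows "\<exists>\<epsilon>::complex. (\<epsilon> = 1 \<or> \<epsilon> = -1) \<and> basic_form m s' = (\<lambda>f. \<epsilon> * basic_form m s f)"
proof -
  have ls': "length s' = m" using assms by (metis distinct_card)
  define \<pi> where "\<pi> a = (if a < m then idx s (s' ! a) else a)" for a
  have into: "\<And>a. a < m \<Longrightarrow> \<pi> a < m"
    unfolding \<pi>_def using assms ls' by (auto simp: nth_mem idx_in)
  have ss: "\<And>a. a < m \<Longrightarrow> s ! (\<pi> a) = s' ! a"
    unfolding \<pi>_def using assms ls' by (auto simp: nth_mem idx_in)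
  have inj: "inj_on \<pi> {..<m}"
  proof (rule inj_onI)
    fix a b assume "a \<in> {..<m}" "b \<in> {..<m}" "\<pi> a = \<pi> b"
    then have "s' ! a = s' ! b" using ss by (metis lessThan_iff)
    then show "a = b" using assms(2) ls' \<open>a \<in> {..<m}\<close> \<open>b \<in> {..<m}\<close> nth_eq_iff_index_eq by auto
  qed
  have "\<pi> ` {..<m} \<subseteq> {..<m}" using into by auto
  then have "\<pi> ` {..<m} = {..<m}"
    using inj by (meson card_image card_subset_eq finite_lessThan)
  then have bij: "bij_betw \<pi> {..<m} {..<m}" using inj by (simp add: bij_betw_def)
  have sp: "\<pi> permutes {0..<m}"
    by (rule bij_imp_permutes) (use bij in \<open>auto simp: \<pi>_def atLeast0LessThan\<close>)
  have "\<And>f. basic_form m s' f = of_int (sign \<pi>) * basic_form m s f"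
    by (rule bf_permute[OF sp]) (use ss in auto)
  moreover have "of_int (sign \<pi>) = (1::complex) \<or> of_int (sign \<pi>) = (-1::complex)"
    by (cases rule: sign_cases[of \<pi>]) auto
  ultimately show ?thesis by blast
qed


definition gfun :: "nat \<Rightarrow> nat list \<Rightarrow> nat list \<Rightarrow> nat \<Rightarrow> nat" where
  "gfun n ix ls b = (if b \<in> set ix then n + ls ! idx ix b else b)"

definition DL :: "nat \<Rightarrow> nat \<Rightarrow> nat list set" where
  "DL n k = {ix. length ix = k \<and> distinct ix \<and> set ix \<subseteq> {..<n}}"

definition LL :: "nat \<Rightarrow> nat \<Rightarrow> nat list set" where
  "LL n k = {ls. length ls = k \<and> set ls \<subseteq> {..<n}}"

definition wt :: "(nat \<Rightarrow> nat \<Rightarrow> complex) \<Rightarrow> nat list \<Rightarrow> nat list \<Rightarrow> complex" where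
  "wt W ix ls = (\<Prod>j<length ix. W j (ix ! j) * W j (ls ! j))"

lemma finite_DL: "finite (DL n k)"
proof -
  have "DL n k \<subseteq> {xs. set xs \<subseteq> {..<n} \<and> length xs = k}" by (auto simp: DL_def)
  then show ?thesis using finite_lists_length_eq[of "{..<n}" k] finite_subset by blast
qed

lemma finite_LL: "finite (LL n k)"
  using finite_lists_length_eq[of "{..<n}" k] by (simp add: LL_def conj_commute)

lemma DL_Suc: "DL n (Suc k) = (\<lambda>(xs, b). xs @ [b]) ` (SIGMA xs:DL n k. {..<n} - set xs)"
proof (rule set_eqI)
  fix ys
  show "ys \<in> DL n (Suc k) \<longleftrightarrow> ys \<in> (\<lambda>(xs, b). xs @ [b]) ` (SIGMA xs:DL n k. {..<n} - set xs)"
  proof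
    assume "ys \<in> DL n (Suc k)"
    then obtain xs b where "ys = xs @ [b]" "length xs = k"
      by (auto simp: DL_def length_Suc_conv_rev)
    then show "ys \<in> (\<lambda>(xs, b). xs @ [b]) ` (SIGMA xs:DL n k. {..<n} - set xs)"
      using \<open>ys \<in> DL n (Suc k)\<close> by (auto simp: DL_def image_iff)
  qed (auto simp: DL_def)
qed

lemma LL_Suc: "LL n (Suc k) = (\<lambda>(xs, b). xs @ [b]) ` (LL n k \<times> {..<n})"
proof (rule set_eqI)
  fix ys
  show "ys \<in> LL n (Suc k) \<longleftrightarrow> ys \<in> (\<lambda>(xs, b). xs @ [b]) ` (LL n k \<times> {..<n})"
  proof
    assume "ys \<in> LL n (Suc k)"
    then obtain xs b where "ys = xs @ [b]" "length xs = k"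
      by (auto simp: LL_def length_Suc_conv_rev)
    then show "ys \<in> (\<lambda>(xs, b). xs @ [b]) ` (LL n k \<times> {..<n})"
      using \<open>ys \<in> LL n (Suc k)\<close> by (auto simp: LL_def image_iff)
  qed (auto simp: LL_def)
qed

lemma inj_snoc: "inj_on (\<lambda>(xs, b). xs @ [b]) A"
  by (auto simp: inj_on_def)

lemma inj_snoc': "inj_on (\<lambda>x. fst x @ [snd x]) A"
  by (auto simp: inj_on_def)

lemma gfun_snoc:
  assumes "distinct ix" "b \<notin> set ix" "length ls = length ix"
  shows "(gfun n ix ls)(b := n + c) = gfun n (ix @ [b]) (ls @ [c])"
proof
  fix x
  show "((gfun n ix ls)(b := n + c)) x = gfun n (ix @ [b]) (ls @ [c]) x"
  proof (cases "x = b")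
    case True
    have "idx (ix @ [b]) b = length ix"
      using idx_nth[of "ix @ [b]" "length ix"] assms by simp
    then show ?thesis using True assms by (simp add: gfun_def nth_append)
  next
    case False
    show ?thesis
    proof (cases "x \<in> set ix")
      case True
      have i: "idx ix x < length ix" "ix ! idx ix x = x" using idx_in[OF assms(1) True] by auto
      have "idx (ix @ [b]) x = idx ix x"
        using idx_nth[of "ix @ [b]" "idx ix x"] assms i by (simp add: nth_append)
      then show ?thesis using True False i assms by (simp add: gfun_def nth_append)
    next
      case False
      then show ?thesis using \<open>x \<noteq> b\<close> by (simp add: gfun_def)
    qed
  qed
qed

lemma gfun_in:
  assumes "distinct ix" "x \<in> set ix" "length ls = length ix"
  shows "gfun n ix ls x \<ge> n"
  using assms by (simp add: gfun_def)

lemma gfun_out: "x \<notin> set ix \<Longrightarrow> gfun n ix ls x = x"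
  by (simp add: gfun_def)

lemma sum_shift_2n:
  fixes f :: "nat \<Rightarrow> complex"
  assumes "\<And>t. t < n \<Longrightarrow> f t = 0"
  shows "(\<Sum>t<2 * n. f t) = (\<Sum>c<n. f (n + c))"
proof -
  have e: "{..<2*n} = {..<n} \<union> {n..<n+n}" by auto
  have "(\<Sum>t<2 * n. f t) = (\<Sum>t<n. f t) + (\<Sum>t\<in>{n..<n+n}. f t)"
    unfolding e by (subst sum.union_disjoint) auto
  also have "(\<Sum>t<n. f t) = 0" using assms by simp
  also have "(\<Sum>t\<in>{n..<n+n}. f t) = (\<Sum>c\<in>{0..<n}. f (c + n))"
    using sum.shift_bounds_nat_ivl[of f 0 n n] by simp
  finally show ?thesis by (simp add: atLeast0LessThan add.commute)
qed

lemma lie_step: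
  assumes "distinct ix" "set ix \<subseteq> {..<n}" "length ls = length ix"
  shows "lie_lin n n (Xmat n w) \<tau> (gfun n ix ls)
     = (\<Sum>b\<in>{..<n} - set ix. \<Sum>c<n. w b * w c * \<tau> (gfun n (ix @ [b]) (ls @ [c])))"
proof -
  let ?g = "gfun n ix ls"
  have "lie_lin n n (Xmat n w) \<tau> ?g = (\<Sum>i<n. \<Sum>t<2 * n. Xmat n w t (?g i) * \<tau> (?g(i := t)))"
    by (simp add: lie_lin_def)
  also have "\<dots> = (\<Sum>i\<in>{..<n} - set ix. \<Sum>t<2 * n. Xmat n w t (?g i) * \<tau> (?g(i := t)))"
  proof (rule sum.mono_neutral_right)
    show "\<forall>i\<in>{..<n} - ({..<n} - set ix). (\<Sum>t<2 * n. Xmat n w t (?g i) * \<tau> (?g(i := t))) = 0"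
    proof
      fix i assume "i \<in> {..<n} - ({..<n} - set ix)"
      then have "gfun n ix ls i \<ge> n" using gfun_in[OF assms(1) _ assms(3)] by auto
      then show "(\<Sum>t<2 * n. Xmat n w t (?g i) * \<tau> (?g(i := t))) = 0" by (simp add: Xmat_def)
    qed
  qed auto
  also have "\<dots> = (\<Sum>b\<in>{..<n} - set ix. \<Sum>c<n. w b * w c * \<tau> (gfun n (ix @ [b]) (ls @ [c])))"
  proof (rule sum.cong[OF refl])
    fix b assume b: "b \<in> {..<n} - set ix"
    have gb: "?g b = b" using b by (simp add: gfun_out)
    have "(\<Sum>t<2 * n. Xmat n w t (?g b) * \<tau> (?g(b := t))) = (\<Sum>c<n. Xmat n w (n + c) (?g b) * \<tau> (?g(b := n + c)))"
      by (rule sum_shift_2n) (simp add: Xmat_def)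
    also have "\<dots> = (\<Sum>c<n. w b * w c * \<tau> (gfun n (ix @ [b]) (ls @ [c])))"
      using b gb gfun_snoc[OF assms(1) _ assms(3)] by (intro sum.cong) (auto simp: Xmat_def)
    finally show "(\<Sum>t<2 * n. Xmat n w t (?g b) * \<tau> (?g(b := t))) = (\<Sum>c<n. w b * w c * \<tau> (gfun n (ix @ [b]) (ls @ [c])))" .
  qed
  finally show ?thesis .
qed

lemma wt_snoc:
  assumes "length ls = length ix"
  shows "wt W (ix @ [b]) (ls @ [c]) = wt W ix ls * (W (length ix) b * W (length ix) c)"
  using assms by (simp add: wt_def nth_append)

lemma Q_raw:
  "foldr (\<lambda>j \<sigma>. lie_lin n n (Xmat n (W j)) \<sigma>) [0..<k] \<tau> (\<lambda>i. i)
     = (\<Sum>ix\<in>DL n k. \<Sum>ls\<in>LL n k. wt W ix ls * \<tau> (gfun n ix ls))"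
proof (induction k arbitrary: \<tau>)
  case 0
  have "DL n 0 = {[]}" "LL n 0 = {[]}" by (auto simp: DL_def LL_def)
  moreover have "gfun n [] [] = (\<lambda>i. i)" by (simp add: gfun_def fun_eq_iff)
  ultimately show ?case by (simp add: wt_def)
next
  case (Suc k)
  let ?F = "\<lambda>j \<sigma>. lie_lin n n (Xmat n (W j)) \<sigma>"
  have "foldr ?F [0..<Suc k] \<tau> (\<lambda>i. i) = foldr ?F [0..<k] (?F k \<tau>) (\<lambda>i. i)"
    by simp
  also have "\<dots> = (\<Sum>ix\<in>DL n k. \<Sum>ls\<in>LL n k. wt W ix ls * ?F k \<tau> (gfun n ix ls))"
    by (rule Suc.IH)
  also have "\<dots> = (\<Sum>ix\<in>DL n k. \<Sum>ls\<in>LL n k. \<Sum>b\<in>{..<n} - set ix. \<Sum>c<n.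
        wt W (ix @ [b]) (ls @ [c]) * \<tau> (gfun n (ix @ [b]) (ls @ [c])))"
  proof (intro sum.cong refl)
    fix ix ls assume "ix \<in> DL n k" "ls \<in> LL n k"
    then have h: "distinct ix" "set ix \<subseteq> {..<n}" "length ls = length ix" "length ix = k"
      by (auto simp: DL_def LL_def)
    show "wt W ix ls * ?F k \<tau> (gfun n ix ls) = (\<Sum>b\<in>{..<n} - set ix. \<Sum>c<n.
        wt W (ix @ [b]) (ls @ [c]) * \<tau> (gfun n (ix @ [b]) (ls @ [c])))"
      using h by (simp add: lie_step wt_snoc sum_distrib_left mult.assoc)
  qed
  also have "\<dots> = (\<Sum>ix\<in>DL n k. \<Sum>b\<in>{..<n} - set ix. \<Sum>ls\<in>LL n k. \<Sum>c<n.
        wt W (ix @ [b]) (ls @ [c]) * \<tau> (gfun n (ix @ [b]) (ls @ [c])))"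
    by (intro sum.cong refl sum.swap)
  also have "\<dots> = (\<Sum>ix\<in>DL n k. \<Sum>b\<in>{..<n} - set ix. \<Sum>q\<in>LL n k \<times> {..<n}.
        wt W (ix @ [b]) (fst q @ [snd q]) * \<tau> (gfun n (ix @ [b]) (fst q @ [snd q])))"
    by (simp add: sum.cartesian_product split_def)
  also have "\<dots> = (\<Sum>p\<in>(SIGMA xs:DL n k. {..<n} - set xs). \<Sum>q\<in>LL n k \<times> {..<n}.
        wt W (fst p @ [snd p]) (fst q @ [snd q]) * \<tau> (gfun n (fst p @ [snd p]) (fst q @ [snd q])))"
    by (subst sum.Sigma) (auto simp: finite_DL split_def)
  also have "\<dots> = (\<Sum>ix\<in>DL n (Suc k). \<Sum>ls\<in>LL n (Suc k). wt W ix ls * \<tau> (gfun n ix ls))"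
    unfolding DL_Suc LL_Suc split_def
    by (simp add: sum.reindex[OF inj_snoc'])
  finally show ?case .
qed

lemma Q_tau_raw:
  "Q_tau n k \<tau> W = (\<Sum>ix\<in>DL n k. \<Sum>ls\<in>LL n k. wt W ix ls * \<tau> (gfun n ix ls))"
  unfolding Q_tau_def by (rule Q_raw)

lemma Q_tau_lin:
  assumes "finite S"
  shows "Q_tau n k (\<lambda>f. \<Sum>x\<in>S. c x * \<tau>s x f) W = (\<Sum>x\<in>S. c x * Q_tau n k (\<tau>s x) W)"
  unfolding Q_tau_raw
  by (simp add: sum_distrib_left sum_distrib_right sum.swap[of _ S] mult.assoc mult.left_commute[of "c _"])


lemma sum_involution_zero:
  fixes T :: "'a \<Rightarrow> complex"
  assumes "finite S" "\<And>x. x \<in> S \<Longrightarrow> \<phi> x \<in> S" "\<And>x. x \<in> S \<Longrightarrow> \<phi> (\<phi> x) = x"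
    "\<And>x. x \<in> S \<Longrightarrow> T (\<phi> x) = - T x"
  shows "(\<Sum>x\<in>S. T x) = 0"
proof -
  have bij: "bij_betw \<phi> S S"
    by (rule bij_betw_byWitness[where f'=\<phi>]) (use assms in auto)
  have "(\<Sum>x\<in>S. T x) = (\<Sum>x\<in>S. T (\<phi> x))"
    using sum.reindex_bij_betw[OF bij, of T] by simp
  also have "\<dots> = - (\<Sum>x\<in>S. T x)" using assms(4) by (simp add: sum_negf)
  finally show ?thesis by simp
qed

lemma gfun_upd:
  assumes "distinct ix" "j0 < length ix" "ix ! j0 = u" "v \<notin> set ix" "length ls = length ix"
  shows "gfun n (ix[j0 := v]) (ls[j0 := w]) b
       = (if b = v then n + w else if b = u then u else gfun n ix ls b)"
proof -
  have u: "u \<in> set ix" using assms by auto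
  have uv: "u \<noteq> v" using u assms by auto
  have sx: "set (ix[j0 := v]) = insert v (set ix - {u})"
    using set_update_distinct[OF assms(1,2)] assms(3) by simp
  have d': "distinct (ix[j0 := v])" using assms by (intro distinct_list_update) auto
  show ?thesis
  proof (cases "b = v")
    case True
    have "idx (ix[j0 := v]) v = j0" using idx_nth[OF d', of j0] assms by simp
    then show ?thesis using True assms by (simp add: gfun_def sx)
  next
    case False
    show ?thesis
    proof (cases "b = u")
      case True
      then show ?thesis using uv sx by (simp add: gfun_def)
    next
      case False
      show ?thesis
      proof (cases "b \<in> set ix")
        case True
        have i: "idx ix b < length ix" "ix ! idx ix b = b" using idx_in[OF assms(1) True] by auto
        have ne: "idx ix b \<noteq> j0" using i assms(3) False by auto
        have "idx (ix[j0 := v]) b = idx ix b"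
          using idx_nth[OF d', of "idx ix b"] i ne by simp
        then show ?thesis using True False \<open>b \<noteq> v\<close> sx ne by (simp add: gfun_def)
      next
        case False
        then show ?thesis using \<open>b \<noteq> v\<close> \<open>b \<noteq> u\<close> sx by (simp add: gfun_def)
      qed
    qed
  qed
qed

definition Tk :: "nat \<Rightarrow> (nat \<Rightarrow> nat \<Rightarrow> complex) \<Rightarrow> nat list \<Rightarrow>
    nat list \<times> nat list \<times> nat \<times> (nat \<Rightarrow> nat) \<Rightarrow> complex" where
  "Tk n W s0 x = (case x of (ix, ls, p, \<sigma>) \<Rightarrow> wt W ix ls * (of_int (sign \<sigma>) *
      (\<Prod>a<n. if gfun n ix ls (\<sigma> a) = (p # (n + p) # s0) ! a then 1 else 0)))"

definition goodk :: "nat \<Rightarrow> nat list \<times> nat list \<times> nat \<times> (nat \<Rightarrow> nat) \<Rightarrow> bool" where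
  "goodk n x = (case x of (ix, ls, p, \<sigma>) \<Rightarrow> gfun n ix ls (\<sigma> 0) = p \<and> gfun n ix ls (\<sigma> 1) = n + p)"

definition phik :: "nat \<Rightarrow> nat list \<times> nat list \<times> nat \<times> (nat \<Rightarrow> nat) \<Rightarrow> nat list \<times> nat list \<times> nat \<times> (nat \<Rightarrow> nat)" where
  "phik n x = (if goodk n x then (case x of (ix, ls, p, \<sigma>) \<Rightarrow>
      (ix[idx ix (\<sigma> 1) := \<sigma> 0], ls[idx ix (\<sigma> 1) := \<sigma> 1], \<sigma> 1, \<sigma> \<circ> Transposition.transpose 0 1)) else x)"

lemma good_facts:
  assumes "2 \<le> n" "ix \<in> DL n k" "ls \<in> LL n k" "\<sigma> permutes {0..<n}" "goodk n (ix, ls, p, \<sigma>)" "p < n"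
  shows "\<sigma> 1 \<in> set ix" "idx ix (\<sigma> 1) < length ix" "ix ! idx ix (\<sigma> 1) = \<sigma> 1"
    "ls ! idx ix (\<sigma> 1) = p" "\<sigma> 0 \<notin> set ix" "\<sigma> 0 = p" "\<sigma> 0 < n" "\<sigma> 1 < n" "\<sigma> 0 \<noteq> \<sigma> 1"
proof -
  have d: "distinct ix" "set ix \<subseteq> {..<n}" "length ls = length ix" "length ix = k" "set ls \<subseteq> {..<n}"
    using assms(2,3) by (auto simp: DL_def LL_def)
  have s01: "\<sigma> 0 < n" "\<sigma> 1 < n" using assms(1,4) permutes_in_image[OF assms(4)] by auto
  show "\<sigma> 0 < n" "\<sigma> 1 < n" by fact+
  show "\<sigma> 0 \<noteq> \<sigma> 1" using permutes_inj[OF assms(4)] by (metis inj_eq zero_neq_one)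
  have g: "gfun n ix ls (\<sigma> 0) = p" "gfun n ix ls (\<sigma> 1) = n + p" using assms(5) by (auto simp: goodk_def)
  show s1: "\<sigma> 1 \<in> set ix"
  proof (rule ccontr)
    assume "\<sigma> 1 \<notin> set ix"
    then have "gfun n ix ls (\<sigma> 1) = \<sigma> 1" by (simp add: gfun_out)
    then show False using g s01 by linarith
  qed
  show "idx ix (\<sigma> 1) < length ix" "ix ! idx ix (\<sigma> 1) = \<sigma> 1" using idx_in[OF d(1) s1] by auto
  show "ls ! idx ix (\<sigma> 1) = p" using g(2) s1 by (simp add: gfun_def)
  show s0: "\<sigma> 0 \<notin> set ix"
  proof
    assume "\<sigma> 0 \<in> set ix"
    then have "gfun n ix ls (\<sigma> 0) \<ge> n" using gfun_in[OF d(1) _ d(3)] by auto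
    then show False using g s01 assms(6) by linarith
  qed
  show "\<sigma> 0 = p" using g(1) s0 by (simp add: gfun_out)
qed

lemma Q_kernel:
  assumes "2 \<le> n"
  shows "Q_tau n k (\<lambda>g. \<Sum>p<n. basic_form n (p # (n + p) # s0) g) W = 0"
proof -
  let ?S = "DL n k \<times> LL n k \<times> {..<n} \<times> {\<sigma>. \<sigma> permutes {0..<n}}"
  have fin: "finite ?S" by (simp add: finite_DL finite_LL finite_permutations)
  have "Q_tau n k (\<lambda>g. \<Sum>p<n. basic_form n (p # (n + p) # s0) g) W = (\<Sum>x\<in>?S. Tk n W s0 x)"
    unfolding Q_tau_raw basic_form_def Tk_def
    by (simp add: sum.cartesian_product[symmetric] sum_distrib_left atLeast0LessThan)
  also have "\<dots> = 0"
  proof -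
    have key: "phik n x \<in> ?S \<and> phik n (phik n x) = x \<and> Tk n W s0 (phik n x) = - Tk n W s0 x"
      if xS: "x \<in> ?S" for x
    proof -
    obtain ix ls p \<sigma> where x: "x = (ix, ls, p, \<sigma>)" by (cases x) auto
    have h: "ix \<in> DL n k" "ls \<in> LL n k" "p < n" "\<sigma> permutes {0..<n}" using xS x by auto
    have d: "distinct ix" "set ix \<subseteq> {..<n}" "length ls = length ix" "length ix = k" "set ls \<subseteq> {..<n}"
      using h by (auto simp: DL_def LL_def)
    show "phik n x \<in> ?S \<and> phik n (phik n x) = x \<and> Tk n W s0 (phik n x) = - Tk n W s0 x"
    proof (cases "goodk n x")
      case False
      have "Tk n W s0 x = 0"
      proof -
        have "(\<Prod>a<n. if gfun n ix ls (\<sigma> a) = (p # (n + p) # s0) ! a then 1 else (0::complex)) = 0"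
        proof (cases "gfun n ix ls (\<sigma> 0) = p")
          case True
          then have "gfun n ix ls (\<sigma> 1) \<noteq> n + p" using False x by (simp add: goodk_def)
          then show ?thesis using assms by (intro prod_zero bexI[of _ 1]) auto
        next
          case False
          then show ?thesis using assms by (intro prod_zero bexI[of _ 0]) auto
        qed
        then show ?thesis by (simp add: Tk_def x)
      qed
      then show ?thesis using False xS by (simp add: phik_def)
    next
      case True
      note gf = good_facts[OF assms h(1,2,4) True[unfolded x] h(3)]
      have gx: "gfun n ix ls (\<sigma> 0) = p" "gfun n ix ls (\<sigma> 1) = n + p"
        using True by (simp_all add: x goodk_def)
      define j0 where "j0 = idx ix (\<sigma> 1)"
      define ix' where "ix' = ix[j0 := \<sigma> 0]"
      define ls' where "ls' = ls[j0 := \<sigma> 1]"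
      define \<sigma>' where "\<sigma>' = \<sigma> \<circ> Transposition.transpose 0 1"
      have px: "phik n x = (ix', ls', \<sigma> 1, \<sigma>')"
        using True by (simp add: phik_def x ix'_def ls'_def \<sigma>'_def j0_def)
      have j0: "j0 < length ix" "ix ! j0 = \<sigma> 1" "ls ! j0 = p" using gf by (auto simp: j0_def)
      have gu: "\<And>b. gfun n ix' ls' b = (if b = \<sigma> 0 then n + \<sigma> 1 else if b = \<sigma> 1 then \<sigma> 1 else gfun n ix ls b)"
        unfolding ix'_def ls'_def by (rule gfun_upd) (use d j0 gf in auto)
      have d': "distinct ix'" unfolding ix'_def using d gf j0 by (intro distinct_list_update) auto
      have sp': "\<sigma>' permutes {0..<n}" unfolding \<sigma>'_def
        by (rule permutes_compose[OF permutes_swap_id h(4)]) (use assms in auto)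
      have "set ix' \<subseteq> {..<n}" unfolding ix'_def by (rule set_update_subsetI) (use d gf in auto)
      moreover have "set ls' \<subseteq> {..<n}" unfolding ls'_def by (rule set_update_subsetI) (use d gf in auto)
      ultimately have inS: "(ix', ls', \<sigma> 1, \<sigma>') \<in> ?S"
        using d d' gf j0 sp' by (auto simp: DL_def LL_def ix'_def ls'_def)
      have s'01: "\<sigma>' 0 = \<sigma> 1" "\<sigma>' 1 = \<sigma> 0" by (auto simp: \<sigma>'_def)
      have good': "goodk n (ix', ls', \<sigma> 1, \<sigma>')"
        using gu gf s'01 by (simp add: goodk_def)
      have idx': "idx ix' (\<sigma>' 1) = j0"
        using idx_nth[OF d', of j0] j0 s'01 by (simp add: ix'_def)
      have bk: "phik n (ix', ls', \<sigma> 1, \<sigma>') = x"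
      proof -
        have "ix'[j0 := \<sigma> 1] = ix" unfolding ix'_def list_update_overwrite
          using list_update_id[of ix j0] j0(2) by simp
        moreover have "ls'[j0 := \<sigma> 0] = ls" unfolding ls'_def list_update_overwrite
          using list_update_id[of ls j0] j0(3) gf(6) by simp
        moreover have "\<sigma>' \<circ> Transposition.transpose 0 1 = \<sigma>"
          by (simp add: \<sigma>'_def o_assoc[symmetric])
        ultimately show ?thesis using good' idx' s'01 gf by (simp add: phik_def x)
      qed
      have wt': "wt W ix' ls' = wt W ix ls"
        unfolding wt_def
      proof -
        have "length ix' = length ix" by (simp add: ix'_def)
        moreover have "\<And>j. j < length ix \<Longrightarrow> W j (ix' ! j) * W j (ls' ! j) = W j (ix ! j) * W j (ls ! j)"
          using j0 gf d by (auto simp: ix'_def ls'_def nth_list_update)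
        ultimately show "(\<Prod>j<length ix'. W j (ix' ! j) * W j (ls' ! j)) = (\<Prod>j<length ix. W j (ix ! j) * W j (ls ! j))"
          by (intro prod.cong) auto
      qed
      have sg: "sign \<sigma>' = - sign \<sigma>"
      proof -
        have "permutation \<sigma>" using h(4) permutes_imp_permutation by blast
        then show ?thesis unfolding \<sigma>'_def
          by (simp add: sign_compose permutation_swap_id sign_swap_id)
      qed
      have pr: "(\<Prod>a<n. if gfun n ix' ls' (\<sigma>' a) = (\<sigma> 1 # (n + \<sigma> 1) # s0) ! a then 1 else (0::complex))
          = (\<Prod>a<n. if gfun n ix ls (\<sigma> a) = (p # (n + p) # s0) ! a then 1 else 0)"
      proof (rule prod.cong[OF refl])
        fix a assume a: "a \<in> {..<n}"
        show "(if gfun n ix' ls' (\<sigma>' a) = (\<sigma> 1 # (n + \<sigma> 1) # s0) ! a then 1 else (0::complex))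
            = (if gfun n ix ls (\<sigma> a) = (p # (n + p) # s0) ! a then 1 else 0)"
        proof (cases "a = 0 \<or> a = 1")
          case True
          then show ?thesis using gu s'01 gf gx by auto
        next
          case False
          then have "\<sigma>' a = \<sigma> a" by (simp add: \<sigma>'_def)
          moreover have "\<sigma> a \<noteq> \<sigma> 0" "\<sigma> a \<noteq> \<sigma> 1"
            using False permutes_inj[OF h(4)] by (auto dest: injD)
          moreover have "(\<sigma> 1 # (n + \<sigma> 1) # s0) ! a = (p # (n + p) # s0) ! a"
            using False by (cases a; cases "a - 1") auto
          ultimately show ?thesis using gu by simp
        qed
      qed
      have "Tk n W s0 (ix', ls', \<sigma> 1, \<sigma>') = - Tk n W s0 x"
        unfolding Tk_def x prod.case wt' sg pr by simp
      then show ?thesis using px inS bk by simp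
    qed
    qed
    show ?thesis using key by (intro sum_involution_zero[OF fin, where \<phi>="phik n"]) auto
  qed
  finally show ?thesis .
qed


lemma sign_conj:
  assumes "p permutes {..<k}" "bij_betw (\<lambda>j. e ! j) {..<k} B" "\<And>j. j < k \<Longrightarrow> f' (e ! j) = j"
  shows "sign (\<lambda>x. if x \<in> B then e ! (p (f' x)) else x) = sign p"
    "(\<lambda>x. if x \<in> B then e ! (p (f' x)) else x) permutes B"
proof -
  interpret permutes_bij_finite p "{..<k}" B "\<lambda>j. e ! j" f' "\<lambda>x. if x \<in> B then e ! (p (f' x)) else x"
    by unfold_locales (use assms in auto)
  show "sign (\<lambda>x. if x \<in> B then e ! (p (f' x)) else x) = sign p"
    by (rule sign_p')
  show "(\<lambda>x. if x \<in> B then e ! (p (f' x)) else x) permutes B"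
    by (rule permutes_p')
qed

definition PS :: "nat set \<Rightarrow> nat list set" where
  "PS X = {xs. distinct xs \<and> set xs = X}"

lemma PS_bij:
  assumes "finite X" "card X = k"
  shows "bij_betw (\<lambda>\<pi>. permute_list \<pi> (sorted_list_of_set X)) {\<pi>. \<pi> permutes {..<k}} (PS X)"
proof -
  let ?e = "sorted_list_of_set X"
  have le: "length ?e = k" "distinct ?e" "set ?e = X" using assms by auto
  show ?thesis
  proof (rule bij_betw_imageI)
    show "inj_on (\<lambda>\<pi>. permute_list \<pi> ?e) {\<pi>. \<pi> permutes {..<k}}"
    proof (rule inj_onI)
      fix \<pi> \<rho> assume p: "\<pi> \<in> {\<pi>. \<pi> permutes {..<k}}" "\<rho> \<in> {\<pi>. \<pi> permutes {..<k}}"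
        and eq: "permute_list \<pi> ?e = permute_list \<rho> ?e"
      show "\<pi> = \<rho>"
      proof
        fix j show "\<pi> j = \<rho> j"
        proof (cases "j < k")
          case True
          have "?e ! (\<pi> j) = ?e ! (\<rho> j)"
            using eq permute_list_nth[of \<pi> ?e j] permute_list_nth[of \<rho> ?e j] p le True by auto
          moreover have "\<pi> j < k" "\<rho> j < k" using p True permutes_in_image by fastforce+
          ultimately show ?thesis using le nth_eq_iff_index_eq by metis
        next
          case False
          from p have "\<pi> permutes {..<k}" "\<rho> permutes {..<k}" by auto
          then show ?thesis using False by (simp add: permutes_not_in)
        qed
      qed
    qed
    show "(\<lambda>\<pi>. permute_list \<pi> ?e) ` {\<pi>. \<pi> permutes {..<k}} = PS X"
    proof (intro set_eqI iffI)
      fix xs assume "xs \<in> (\<lambda>\<pi>. permute_list \<pi> ?e) ` {\<pi>. \<pi> permutes {..<k}}"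
      then show "xs \<in> PS X" using le by (auto simp: PS_def)
    next
      fix xs assume xs: "xs \<in> PS X"
      then have xd: "distinct xs" "set xs = X" by (auto simp: PS_def)
      then have lx: "length xs = k" using assms distinct_card by metis
      define \<pi> where "\<pi> j = (if j < k then idx ?e (xs ! j) else j)" for j
      have into: "\<And>j. j < k \<Longrightarrow> \<pi> j < k" "\<And>j. j < k \<Longrightarrow> ?e ! \<pi> j = xs ! j"
        unfolding \<pi>_def using idx_in[OF le(2)] le xd lx by (auto simp: nth_mem)
      have inj: "inj_on \<pi> {..<k}"
      proof (rule inj_onI)
        fix a b assume "a \<in> {..<k}" "b \<in> {..<k}" "\<pi> a = \<pi> b"
        then have "xs ! a = xs ! b" using into by (metis lessThan_iff)
        then show "a = b" using xd lx \<open>a \<in> {..<k}\<close> \<open>b \<in> {..<k}\<close> nth_eq_iff_index_eq by auto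
      qed
      have "\<pi> ` {..<k} \<subseteq> {..<k}" using into by auto
      then have "\<pi> ` {..<k} = {..<k}"
        using inj by (meson card_image card_subset_eq finite_lessThan)
      then have "bij_betw \<pi> {..<k} {..<k}" using inj by (simp add: bij_betw_def)
      then have pp: "\<pi> permutes {..<k}" by (rule bij_imp_permutes) (simp add: \<pi>_def)
      have "permute_list \<pi> ?e = xs"
        by (rule nth_equalityI) (use lx le into pp in \<open>auto simp: permute_list_nth\<close>)
      then show "xs \<in> (\<lambda>\<pi>. permute_list \<pi> ?e) ` {\<pi>. \<pi> permutes {..<k}}" using pp by blast
    qed
  qed
qed

lemma minor_alt:
  "minor k W \<alpha> = (\<Sum>\<pi> | \<pi> permutes {..<k}. of_int (sign \<pi>) * (\<Prod>j<k. W j (sorted_list_of_set \<alpha> ! \<pi> j)))"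
proof -
  let ?e = "sorted_list_of_set \<alpha>"
  have "minor k W \<alpha> = (\<Sum>\<sigma> | \<sigma> permutes {..<k}. of_int (sign \<sigma>) * (\<Prod>a<k. W (\<sigma> a) (?e ! a)))"
    by (simp add: minor_def atLeast0LessThan)
  also have "\<dots> = (\<Sum>\<pi> | \<pi> permutes {..<k}. of_int (sign (inv \<pi>)) * (\<Prod>a<k. W (inv \<pi> a) (?e ! a)))"
    by (rule sum_permutations_inverse)
  also have "\<dots> = (\<Sum>\<pi> | \<pi> permutes {..<k}. of_int (sign \<pi>) * (\<Prod>j<k. W j (?e ! \<pi> j)))"
  proof (rule sum.cong[OF refl])
    fix \<pi> assume "\<pi> \<in> {\<pi>. \<pi> permutes {..<k}}"
    then have pp: "\<pi> permutes {..<k}" by simp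
    have "sign (inv \<pi>) = sign \<pi>" using permutes_imp_permutation[OF finite_lessThan pp] by (simp add: sign_inverse)
    moreover have "(\<Prod>a<k. W (inv \<pi> a) (?e ! a)) = (\<Prod>j<k. W j (?e ! \<pi> j))"
    proof -
      have bij: "bij_betw \<pi> {..<k} {..<k}" using pp permutes_imp_bij by blast
      have "(\<Prod>j<k. W j (?e ! \<pi> j)) = (\<Prod>j<k. (\<lambda>a. W (inv \<pi> a) (?e ! a)) (\<pi> j))"
        using permutes_inverses(2)[OF pp] by simp
      also have "\<dots> = (\<Prod>a<k. W (inv \<pi> a) (?e ! a))"
        by (rule prod.reindex_bij_betw[OF bij])
      finally show ?thesis by simp
    qed
    ultimately show "of_int (sign (inv \<pi>)) * (\<Prod>a<k. W (inv \<pi> a) (?e ! a)) =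
         of_int (sign \<pi>) * (\<Prod>j<k. W j (?e ! \<pi> j))" by simp
  qed
  finally show ?thesis .
qed


lemma gfun_image:
  assumes "ix \<in> DL n k" "ls \<in> LL n k"
  shows "gfun n ix ls ` {..<n} = ({..<n} - set ix) \<union> (\<lambda>c. n + c) ` set ls"
proof -
  have d: "distinct ix" "set ix \<subseteq> {..<n}" "length ls = length ix" "length ix = k" "set ls \<subseteq> {..<n}"
    using assms by (auto simp: DL_def LL_def)
  show ?thesis
  proof (intro set_eqI iffI)
    fix y assume "y \<in> gfun n ix ls ` {..<n}"
    then obtain b where b: "b < n" "y = gfun n ix ls b" by auto
    show "y \<in> ({..<n} - set ix) \<union> (\<lambda>c. n + c) ` set ls"
    proof (cases "b \<in> set ix")
      case True
      then have "idx ix b < length ls" using idx_in[OF d(1) True] d by simp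
      then show ?thesis using b True by (auto simp: gfun_def)
    next
      case False
      then show ?thesis using b by (simp add: gfun_out)
    qed
  next
    fix y assume "y \<in> ({..<n} - set ix) \<union> (\<lambda>c. n + c) ` set ls"
    then show "y \<in> gfun n ix ls ` {..<n}"
    proof
      assume "y \<in> {..<n} - set ix"
      then show ?thesis by (auto simp: gfun_out image_iff intro!: bexI[of _ y])
    next
      assume "y \<in> (\<lambda>c. n + c) ` set ls"
      then obtain j where j: "j < length ls" "y = n + ls ! j" by (auto simp: in_set_conv_nth)
      have ij1: "ix ! j \<in> set ix" using j d by auto
      then have ij: "ix ! j \<in> set ix" "ix ! j < n" using d(2) by auto
      have "idx ix (ix ! j) = j" using idx_nth[OF d(1)] j d by simp
      then have "gfun n ix ls (ix ! j) = y" using ij j by (simp add: gfun_def)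
      then show ?thesis using ij by auto
    qed
  qed
qed

lemma setsplit_eq:
  fixes A A' B B' :: "nat set"
  assumes "A \<union> (\<lambda>c. n + c) ` B = A' \<union> (\<lambda>c. n + c) ` B'" "A \<subseteq> {..<n}" "A' \<subseteq> {..<n}"
  shows "A = A'" "B = B'"
proof -
  have "A = (A \<union> (\<lambda>c. n + c) ` B) \<inter> {..<n}" using assms(2) by auto
  also have "\<dots> = (A' \<union> (\<lambda>c. n + c) ` B') \<inter> {..<n}" using assms(1) by simp
  also have "\<dots> = A'" using assms(3) by auto
  finally show "A = A'" .
  have "(\<lambda>c. n + c) ` B = (A \<union> (\<lambda>c. n + c) ` B) - {..<n}" using assms(2) by auto
  also have "\<dots> = (A' \<union> (\<lambda>c. n + c) ` B') - {..<n}" using assms(1) by simp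
  also have "\<dots> = (\<lambda>c. n + c) ` B'" using assms(3) by auto
  finally show "B = B'" by (simp add: inj_image_eq_iff)
qed

lemma sum_prod_sep:
  fixes c :: complex
  shows "(\<Sum>r\<in>A \<times> B. c * (f (fst r) * g (snd r))) = c * (sum f A * sum g B)"
proof -
  have "(\<Sum>r\<in>A \<times> B. c * (f (fst r) * g (snd r))) = (\<Sum>x\<in>A. \<Sum>y\<in>B. c * (f x * g y))"
    by (simp add: sum.cartesian_product split_def)
  also have "\<dots> = c * (sum f A * sum g B)"
    by (simp add: sum_distrib_left sum_distrib_right mult.assoc sum.swap[of _ B])
  finally show ?thesis .
qed

lemma Q_bf:
  fixes s :: "nat list" and n k :: nat
  defines "I0 \<equiv> {b. b < n \<and> b \<notin> set s}" and "Y \<equiv> {c. c < n \<and> n + c \<in> set s}"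
  assumes ds: "distinct s" "length s = n" "set s \<subseteq> {..<2*n}" "card Y = k"
  shows "Q_tau n k (basic_form n s) W
     = basic_form n s (gfun n (sorted_list_of_set I0) (sorted_list_of_set Y)) * minor k W I0 * minor k W Y"
proof -
  let ?e1 = "sorted_list_of_set I0" and ?e2 = "sorted_list_of_set Y"
  let ?C = "basic_form n s (gfun n ?e1 ?e2)"
  have finI: "finite I0" "finite Y" "I0 \<subseteq> {..<n}" "Y \<subseteq> {..<n}" by (auto simp: I0_def Y_def)
  have ss: "set s = ({..<n} - I0) \<union> (\<lambda>c. n + c) ` Y"
  proof (intro set_eqI iffI)
    fix x assume x: "x \<in> set s"
    show "x \<in> ({..<n} - I0) \<union> (\<lambda>c. n + c) ` Y"
    proof (cases "x < n")
      case True then show ?thesis using x by (auto simp: I0_def)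
    next
      case False
      then have "x - n < n" "n + (x - n) = x" using x ds(3) by auto
      then show ?thesis using x by (auto simp: Y_def image_iff intro!: bexI[of _ "x - n"])
    qed
  qed (auto simp: I0_def Y_def)
  have cI: "card I0 = k"
  proof -
    have "n = card (set s)" using ds distinct_card by metis
    also have "\<dots> = card ({..<n} - I0) + card ((\<lambda>c. n + c) ` Y)"
      unfolding ss by (rule card_Un_disjoint) (auto simp: finI)
    also have "\<dots> = (n - card I0) + k" using finI ds(4) by (simp add: card_Diff_subset card_image)
    finally show ?thesis using card_mono[OF _ finI(3)] by simp
  qed
  have e1: "length ?e1 = k" "distinct ?e1" "set ?e1 = I0" using cI finI by auto
  have e2: "length ?e2 = k" "distinct ?e2" "set ?e2 = Y" using ds(4) finI by auto
  define F where "F = (\<lambda>ix ls. wt W ix ls * basic_form n s (gfun n ix ls))"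
  have "Q_tau n k (basic_form n s) W = (\<Sum>ix\<in>DL n k. \<Sum>ls\<in>LL n k. F ix ls)"
    by (simp add: Q_tau_raw F_def)
  also have "\<dots> = (\<Sum>q\<in>DL n k \<times> LL n k. F (fst q) (snd q))"
    by (simp add: sum.cartesian_product split_def)
  also have "\<dots> = (\<Sum>q\<in>PS I0 \<times> PS Y. F (fst q) (snd q))"
  proof (rule sum.mono_neutral_right)
    show "finite (DL n k \<times> LL n k)" by (simp add: finite_DL finite_LL)
    show "PS I0 \<times> PS Y \<subseteq> DL n k \<times> LL n k"
      using finI cI ds(4) by (auto simp: PS_def DL_def LL_def distinct_card)
    show "\<forall>q\<in>DL n k \<times> LL n k - PS I0 \<times> PS Y. F (fst q) (snd q) = 0"
    proof
      fix q assume q: "q \<in> DL n k \<times> LL n k - PS I0 \<times> PS Y"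
      obtain ix ls where qq: "q = (ix, ls)" by (cases q)
      have h: "ix \<in> DL n k" "ls \<in> LL n k" using q qq by auto
      show "F (fst q) (snd q) = 0"
      proof (rule ccontr)
        assume "F (fst q) (snd q) \<noteq> 0"
        then have "basic_form n s (gfun n ix ls) \<noteq> 0" by (simp add: F_def qq)
        then have "gfun n ix ls ` {..<n} = set s" using bf_support ds(2) by blast
        then have eq: "({..<n} - set ix) \<union> (\<lambda>c. n + c) ` set ls = ({..<n} - I0) \<union> (\<lambda>c. n + c) ` Y"
          using gfun_image[OF h] ss by simp
        have "{..<n} - set ix = {..<n} - I0" "set ls = Y"
          using setsplit_eq[OF eq] by auto
        then have "set ix = I0" "set ls = Y" using h finI by (auto simp: DL_def)
        moreover have "distinct ls"
          using h \<open>set ls = Y\<close> ds(4) by (auto simp: LL_def intro: card_distinct)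
        ultimately have "q \<in> PS I0 \<times> PS Y" using h qq by (auto simp: PS_def DL_def)
        then show False using q by simp
      qed
    qed
  qed
  also have "\<dots> = (\<Sum>r\<in>{\<pi>. \<pi> permutes {..<k}} \<times> {\<pi>. \<pi> permutes {..<k}}.
        F (permute_list (fst r) ?e1) (permute_list (snd r) ?e2))"
  proof -
    have bij: "bij_betw (map_prod (\<lambda>\<pi>. permute_list \<pi> ?e1) (\<lambda>\<pi>. permute_list \<pi> ?e2))
        ({\<pi>. \<pi> permutes {..<k}} \<times> {\<pi>. \<pi> permutes {..<k}}) (PS I0 \<times> PS Y)"
      by (intro bij_betw_map_prod PS_bij) (use finI cI ds(4) in auto)
    show ?thesis
      using sum.reindex_bij_betw[OF bij, of "\<lambda>q. F (fst q) (snd q)"] by (simp add: split_def)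
  qed
  also have "\<dots> = (\<Sum>r\<in>{\<pi>. \<pi> permutes {..<k}} \<times> {\<pi>. \<pi> permutes {..<k}}.
        ?C * ((of_int (sign (fst r)) * (\<Prod>j<k. W j (?e1 ! fst r j))) *
              (of_int (sign (snd r)) * (\<Prod>j<k. W j (?e2 ! snd r j)))))"
  proof (rule sum.cong[OF refl])
    fix r assume r: "r \<in> {\<pi>. \<pi> permutes {..<k}} \<times> {\<pi>. \<pi> permutes {..<k}}"
    obtain \<pi> \<rho> where rr: "r = (\<pi>, \<rho>)" by (cases r)
    have pp: "\<pi> permutes {..<k}" "\<rho> permutes {..<k}" using r rr by auto
    have perm: "permutation \<pi>" "permutation \<rho>"
      using pp permutes_imp_permutation[OF finite_lessThan] by auto
    let ?i = "permute_list \<pi> ?e1" and ?l = "permute_list \<rho> ?e2"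
    have wt: "wt W ?i ?l = (\<Prod>j<k. W j (?e1 ! \<pi> j)) * (\<Prod>j<k. W j (?e2 ! \<rho> j))"
      unfolding wt_def using e1 e2 pp by (simp add: permute_list_nth prod.distrib)
    define p where "p = \<rho> \<circ> inv \<pi>"
    have pp': "p permutes {..<k}" unfolding p_def using pp by (intro permutes_compose permutes_inv)
    define \<theta> where "\<theta> = (\<lambda>x. if x \<in> I0 then ?e1 ! (p (idx ?e1 x)) else x)"
    have bij1: "bij_betw (\<lambda>j. ?e1 ! j) {..<k} I0"
      using e1 by (metis bij_betw_nth lessThan_atLeast0)
    have idx1: "\<And>j. j < k \<Longrightarrow> idx ?e1 (?e1 ! j) = j" using idx_nth[OF e1(2)] e1(1) by auto
    have th: "sign \<theta> = sign p" "\<theta> permutes I0"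
      unfolding \<theta>_def using sign_conj[OF pp' bij1 idx1] by auto
    have thn: "\<theta> permutes {0..<n}" using th(2) finI permutes_subset by (auto simp: atLeast0LessThan)
    have sp: "sign p = sign \<rho> * sign \<pi>"
      unfolding p_def using perm by (simp add: sign_compose permutation_inverse sign_inverse)
    have gg: "gfun n ?i ?l = gfun n ?e1 ?e2 \<circ> \<theta>"
    proof
      fix b
      show "gfun n ?i ?l b = (gfun n ?e1 ?e2 \<circ> \<theta>) b"
      proof (cases "b \<in> I0")
        case True
        have di: "distinct ?i" "set ?i = I0" using e1 pp by auto
        have ib: "idx ?e1 b < k" "?e1 ! idx ?e1 b = b" using idx_in[OF e1(2)] e1 True by auto
        have ik: "inv \<pi> (idx ?e1 b) < k" using ib permutes_in_image[OF permutes_inv[OF pp(1)]] by auto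
        have "?i ! inv \<pi> (idx ?e1 b) = b"
          using ik e1 pp ib permutes_inverses(1)[OF pp(1)] by (simp add: permute_list_nth)
        then have ii: "idx ?i b = inv \<pi> (idx ?e1 b)" using idx_nth[OF di(1)] ik e1 by (metis length_permute_list)
        have pk: "p (idx ?e1 b) < k" using ib permutes_in_image[OF pp'] by auto
        have "gfun n ?i ?l b = n + ?e2 ! p (idx ?e1 b)"
          using True di ii ik e2 pp by (simp add: gfun_def permute_list_nth p_def)
        moreover have "(gfun n ?e1 ?e2 \<circ> \<theta>) b = n + ?e2 ! p (idx ?e1 b)"
        proof -
          have "?e1 ! p (idx ?e1 b) \<in> I0" using pk e1 by (metis nth_mem)
          then show ?thesis using True pk e1 idx1 by (simp add: \<theta>_def gfun_def)
        qed
        ultimately show ?thesis by simp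
      next
        case False
        then have "b \<notin> set ?i" "b \<notin> set ?e1" using e1 pp by auto
        then show ?thesis using False by (simp add: gfun_out \<theta>_def)
      qed
    qed
    have "basic_form n s (gfun n ?i ?l) = of_int (sign \<rho>) * of_int (sign \<pi>) * ?C"
      unfolding gg bf_compose[OF thn] th sp by simp
    then show "F (permute_list (fst r) ?e1) (permute_list (snd r) ?e2) =
        ?C * ((of_int (sign (fst r)) * (\<Prod>j<k. W j (?e1 ! fst r j))) *
              (of_int (sign (snd r)) * (\<Prod>j<k. W j (?e2 ! snd r j))))"
      by (simp add: F_def rr wt)
  qed
  also have "\<dots> = ?C * ((\<Sum>\<pi> | \<pi> permutes {..<k}. of_int (sign \<pi>) * (\<Prod>j<k. W j (?e1 ! \<pi> j))) *
       (\<Sum>\<rho> | \<rho> permutes {..<k}. of_int (sign \<rho>) * (\<Prod>j<k. W j (?e2 ! \<rho> j))))"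
    by (rule sum_prod_sep)
  also have "\<dots> = ?C * minor k W I0 * minor k W Y"
    unfolding minor_alt by (simp add: mult.assoc)
  finally show ?thesis .
qed


definition blk :: "nat \<Rightarrow> nat set \<Rightarrow> nat set \<Rightarrow> nat \<Rightarrow> nat list" where
  "blk n A B i = (if i \<in> A then [i] else []) @ (if i \<in> B then [n + i] else [])"

definition il :: "nat \<Rightarrow> nat set \<Rightarrow> nat set \<Rightarrow> nat list" where
  "il n A B = concat (map (blk n A B) [0..<n])"

lemma set_blks: "set (concat (map (blk n A B) xs)) = {i \<in> set xs. i \<in> A} \<union> (\<lambda>i. n + i) ` {i \<in> set xs. i \<in> B}"
  by (induction xs) (auto simp: blk_def)

lemma distinct_blks:
  assumes "distinct xs" "set xs \<subseteq> {..<n}"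
  shows "distinct (concat (map (blk n A B) xs))"
  using assms
proof (induction xs)
  case Nil then show ?case by simp
next
  case (Cons x xs)
  have "distinct (blk n A B x)" using Cons.prems by (auto simp: blk_def)
  moreover have "set (blk n A B x) \<inter> set (concat (map (blk n A B) xs)) = {}"
    using Cons.prems unfolding set_blks by (auto simp: blk_def)
  ultimately show ?case using Cons by simp
qed

lemma set_il: "A \<subseteq> {..<n} \<Longrightarrow> B \<subseteq> {..<n} \<Longrightarrow> set (il n A B) = A \<union> (\<lambda>i. n + i) ` B"
  unfolding il_def set_blks by auto

lemma distinct_il: "distinct (il n A B)"
  unfolding il_def by (rule distinct_blks) auto

lemma length_il:
  assumes "A \<subseteq> {..<n}" "B \<subseteq> {..<n}"
  shows "length (il n A B) = card A + card B"
proof -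
  have fin: "finite A" "finite B" using assms finite_subset by auto
  have "length (il n A B) = card (set (il n A B))" by (rule distinct_card[symmetric]) (rule distinct_il)
  also have "\<dots> = card A + card ((\<lambda>i. n + i) ` B)"
    unfolding set_il[OF assms] by (rule card_Un_disjoint) (use fin assms in auto)
  also have "\<dots> = card A + card B" by (simp add: card_image)
  finally show ?thesis .
qed

lemma il_insert:
  assumes "p < n" "p \<notin> A" "p \<notin> B"
  shows "\<exists>pre suf. il n A B = pre @ suf \<and> il n (insert p A) (insert p B) = pre @ p # (n + p) # suf"
proof -
  have u1: "[0..<n] = [0..<p] @ [p..<n]" using upt_add_eq_append[of 0 p "n - p"] assms(1) by simp
  have u2: "[p..<n] = p # [Suc p..<n]" by (rule upt_conv_Cons) (use assms(1) in simp)
  have up: "[0..<n] = [0..<p] @ p # [Suc p..<n]" using u1 u2 by simp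
  have eq1: "map (blk n (insert p A) (insert p B)) [0..<p] = map (blk n A B) [0..<p]"
    by (intro map_cong refl) (auto simp: blk_def)
  have eq2: "map (blk n (insert p A) (insert p B)) [Suc p..<n] = map (blk n A B) [Suc p..<n]"
    by (intro map_cong refl) (auto simp: blk_def)
  have b1: "blk n A B p = []" "blk n (insert p A) (insert p B) p = [p, n + p]"
    using assms by (auto simp: blk_def)
  show ?thesis
    by (rule exI[of _ "concat (map (blk n A B) [0..<p])"], rule exI[of _ "concat (map (blk n A B) [Suc p..<n])"])
       (simp add: il_def up eq1 eq2 b1)
qed

lemma bf_il_insert:
  assumes "p < n" "A \<subseteq> {..<n}" "B \<subseteq> {..<n}" "card A + card B + 2 \<le> m"
  shows "basic_form m (p # (n + p) # il n A B) f
       = (if p \<in> A \<or> p \<in> B then 0 else basic_form m (il n (insert p A) (insert p B)) f)"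
proof (cases "p \<in> A \<or> p \<in> B")
  case True
  have mem: "p \<in> set (il n A B) \<or> n + p \<in> set (il n A B)" using True set_il[OF assms(2,3)] by auto
  have len: "length (p # (n + p) # il n A B) \<le> m" using length_il[OF assms(2,3)] assms(4) by simp
  have "basic_form m (p # (n + p) # il n A B) f = 0" by (rule bf_dup_zero[OF len mem])
  then show ?thesis using True by simp
next
  case False
  then obtain pre suf where ps: "il n A B = pre @ suf" "il n (insert p A) (insert p B) = pre @ p # (n + p) # suf"
    using il_insert[OF assms(1)] by blast
  have "length (il n A B) + 2 \<le> m" using length_il[OF assms(2,3)] assms(4) by simp
  then have "basic_form m ([] @ pre @ p # (n + p) # suf) f = basic_form m ([] @ p # (n + p) # pre @ suf) f"
    using ps by (intro bf_move_pair) simp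
  then show ?thesis using False ps by simp
qed

lemma perms2: "{\<sigma>. \<sigma> permutes {0..<(2::nat)}} = {id, Transposition.transpose 0 1}"
proof (intro set_eqI iffI)
  fix \<sigma> assume "\<sigma> \<in> {\<sigma>. \<sigma> permutes {0..<(2::nat)}}"
  then have sp: "\<sigma> permutes {0..<2}" by simp
  have a: "\<sigma> 0 < 2" "\<sigma> 1 < 2" using permutes_in_image[OF sp, of 0] permutes_in_image[OF sp, of 1] by auto
  have b: "\<sigma> 0 \<noteq> \<sigma> 1" using permutes_inj[OF sp] by (metis inj_eq zero_neq_one)
  have s01: "\<sigma> 0 \<in> {0, 1}" "\<sigma> 1 \<in> {0, 1}" "\<sigma> 0 \<noteq> \<sigma> 1" using a b by auto
  have out: "\<And>x. x \<ge> 2 \<Longrightarrow> \<sigma> x = x" using permutes_not_in[OF sp] by auto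
  show "\<sigma> \<in> {id, Transposition.transpose 0 1}"
  proof (cases "\<sigma> 0 = 0")
    case True
    then have "\<sigma> 1 = 1" using s01 by auto
    have "\<sigma> x = id x" for x
    proof -
      consider "x = 0" | "x = 1" | "x \<ge> 2" by linarith
      then show ?thesis using True \<open>\<sigma> 1 = 1\<close> out by cases auto
    qed
    then have "\<sigma> = id" by (simp add: fun_eq_iff)
    then show ?thesis by simp
  next
    case False
    then have "\<sigma> 0 = 1" "\<sigma> 1 = 0" using s01 by auto
    have "\<sigma> x = Transposition.transpose 0 1 x" for x
    proof -
      consider "x = 0" | "x = 1" | "x \<ge> 2" by linarith
      then show ?thesis using \<open>\<sigma> 0 = 1\<close> \<open>\<sigma> 1 = 0\<close> out by cases (auto simp: Transposition.transpose_def)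
    qed
    then have "\<sigma> = Transposition.transpose 0 1" by (simp add: fun_eq_iff)
    then show ?thesis by simp
  qed
next
  fix \<sigma> assume "\<sigma> \<in> {id, Transposition.transpose 0 (1::nat)}"
  then show "\<sigma> \<in> {\<sigma>. \<sigma> permutes {0..<2}}"
    by (auto intro: permutes_swap_id permutes_id)
qed

lemma bf2: "basic_form 2 [x, y] g = (if g 0 = x \<and> g 1 = y then 1 else 0) - (if g 1 = x \<and> g 0 = y then 1 else 0)"
proof -
  have ne: "id \<noteq> Transposition.transpose (0::nat) 1" by (metis id_apply transpose_apply_first zero_neq_one)
  have pr: "(\<Prod>a<2. F a) = F 0 * F 1" for F :: "nat \<Rightarrow> complex"
    by (simp add: numeral_2_eq_2)
  have "basic_form 2 [x, y] g = (\<Sum>\<sigma>\<in>{id, Transposition.transpose 0 1}.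
      of_int (sign \<sigma>) * (\<Prod>a<2. if g (\<sigma> a) = [x, y] ! a then 1 else 0))"
    unfolding basic_form_def perms2 ..
  also have "\<dots> = (\<Prod>a<2. if g (id a) = [x, y] ! a then 1 else 0)
     - (\<Prod>a<2. if g (Transposition.transpose 0 1 a) = [x, y] ! a then 1 else 0)"
    using ne by (simp add: sign_swap_id)
  also have "\<dots> = (if g 0 = x \<and> g 1 = y then 1 else 0) - (if g 1 = x \<and> g 0 = y then 1 else 0)"
  proof -
    have t: "Transposition.transpose 0 1 (0::nat) = 1" "Transposition.transpose 0 1 (1::nat) = 0"
      by (auto simp: Transposition.transpose_def)
    have n: "[x, y] ! 0 = x" "[x, y] ! 1 = y" by simp_all
    have im: "\<And>A B. (if A then 1 else 0) * (if B then 1 else 0) = (if A \<and> B then 1 else (0::complex))"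
      by simp
    show ?thesis unfolding pr id_apply t n im by (rule refl)
  qed
  finally show ?thesis .
qed

lemma omega_decomp: "omega_s n g = (\<Sum>i<n. basic_form 2 [i, n + i] g)"
proof -
  have "(\<Sum>i<n. basic_form 2 [i, n + i] g)
      = (\<Sum>i<n. if i = g 0 then (if g 1 = n + i then 1 else 0) else 0)
      - (\<Sum>i<n. if i = g 1 then (if g 0 = n + i then 1 else 0) else 0)"
    unfolding bf2 sum_subtractf[symmetric] by (intro sum.cong) auto
  also have "\<dots> = (if g 0 < n \<and> g 1 = g 0 + n then 1 else 0) - (if g 1 < n \<and> g 0 = g 1 + n then 1 else 0)"
    by (simp add: add.commute)
  also have "\<dots> = omega_s n g" by (auto simp: omega_s_def)
  finally show ?thesis by simp
qed


definition gam :: "nat \<Rightarrow> nat \<Rightarrow> (nat \<Rightarrow> nat) \<Rightarrow> (nat \<Rightarrow> nat) \<Rightarrow> nat \<Rightarrow> nat" where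
  "gam p q \<mu> \<nu> x = (if x < p then \<mu> x else if x < p + q then \<nu> (x - p) + p else x)"

lemma gam_props:
  assumes "\<mu> permutes {0..<p}" "\<nu> permutes {0..<q}"
  shows "gam p q \<mu> \<nu> permutes {0..<p+q}" "sign (gam p q \<mu> \<nu>) = sign \<mu> * sign \<nu>"
proof -
  let ?e = "[p..<p+q]"
  define \<nu>' where "\<nu>' = (\<lambda>x. if x \<in> {p..<p+q} then ?e ! (\<nu> (x - p)) else x)"
  have nq: "\<nu> permutes {..<q}" using assms(2) by (simp add: atLeast0LessThan)
  have bij0: "bij_betw (\<lambda>j. p + j) {..<q} {p..<p+q}"
  proof (rule bij_betw_imageI)
    show "inj_on ((+) p) {..<q}" by (auto simp: inj_on_def)
    show "(+) p ` {..<q} = {p..<p + q}"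
    proof (intro set_eqI iffI)
      fix x assume "x \<in> {p..<p + q}"
      then have "x = p + (x - p)" "x - p < q" by auto
      then show "x \<in> (+) p ` {..<q}" by blast
    qed auto
  qed
  have bij: "bij_betw (\<lambda>j. ?e ! j) {..<q} {p..<p+q}"
    by (rule bij_betw_cong[THEN iffD1, OF _ bij0]) auto
  have sc: "sign \<nu>' = sign \<nu>" "\<nu>' permutes {p..<p+q}"
    unfolding \<nu>'_def using sign_conj[OF nq bij, of "\<lambda>x. x - p"] by auto
  have nin: "\<And>j. j < q \<Longrightarrow> \<nu> j < q" using permutes_in_image[OF nq] by auto
  have eq: "gam p q \<mu> \<nu> = \<mu> \<circ> \<nu>'"
  proof
    fix x
    show "gam p q \<mu> \<nu> x = (\<mu> \<circ> \<nu>') x"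
    proof (cases "x < p")
      case True then show ?thesis by (simp add: gam_def \<nu>'_def)
    next
      case False
      show ?thesis
      proof (cases "x < p + q")
        case True
        have "\<nu> (x - p) < q" using nin True False by simp
        moreover then have "\<mu> (p + \<nu> (x - p)) = p + \<nu> (x - p)"
          using permutes_not_in[OF assms(1)] by simp
        ultimately show ?thesis using True False by (simp add: gam_def \<nu>'_def add.commute)
      next
        case False
        then show ?thesis using \<open>\<not> x < p\<close> permutes_not_in[OF assms(1)] by (simp add: gam_def \<nu>'_def)
      qed
    qed
  qed
  have m1: "\<mu> permutes {0..<p+q}" by (rule permutes_subset[OF assms(1)]) auto
  have m2: "\<nu>' permutes {0..<p+q}" by (rule permutes_subset[OF sc(2)]) auto
  show "gam p q \<mu> \<nu> permutes {0..<p+q}" unfolding eq by (rule permutes_compose[OF m2 m1])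
  have "permutation \<mu>" "permutation \<nu>'"
    using m1 m2 permutes_imp_permutation[OF finite_atLeastLessThan] by auto
  then show "sign (gam p q \<mu> \<nu>) = sign \<mu> * sign \<nu>" unfolding eq by (simp add: sign_compose sc)
qed

lemma prod_split_add:
  fixes F :: "nat \<Rightarrow> complex"
  shows "(\<Prod>a<p+q. F a) = (\<Prod>a<p. F a) * (\<Prod>a<q. F (a + p))"
proof -
  have e: "{..<p+q} = {..<p} \<union> {p..<p+q}" by auto
  have "(\<Prod>a<p+q. F a) = (\<Prod>a<p. F a) * (\<Prod>a\<in>{p..<p+q}. F a)"
    unfolding e by (subst prod.union_disjoint) auto
  also have "(\<Prod>a\<in>{p..<p+q}. F a) = (\<Prod>a\<in>{0..<q}. F (a + p))"
    using prod.shift_bounds_nat_ivl[of F 0 p q] by (simp add: add.commute)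
  finally show ?thesis by (simp add: atLeast0LessThan)
qed

lemma wedge_bf:
  assumes "length s = p"
  shows "wedge p q (basic_form p s) (basic_form q t) f = basic_form (p + q) (s @ t) f"
proof -
  let ?P = "\<lambda>m. {\<sigma>. \<sigma> permutes {0..<m}}"
  define H where "H = (\<lambda>\<sigma>'. of_int (sign \<sigma>') *
      (\<Prod>a<p+q. if f (\<sigma>' a) = (s @ t) ! a then 1 else (0::complex)))"
  have key: "of_int (sign \<sigma>) * basic_form p s (f \<circ> \<sigma>) * basic_form q t (\<lambda>i. f (\<sigma> (i + p)))
      = (\<Sum>\<mu>\<in>?P p. \<Sum>\<nu>\<in>?P q. H (\<sigma> \<circ> gam p q \<mu> \<nu>))"
    if sp: "\<sigma> \<in> ?P (p + q)" for \<sigma>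
  proof -
    have "of_int (sign \<sigma>) * basic_form p s (f \<circ> \<sigma>) * basic_form q t (\<lambda>i. f (\<sigma> (i + p)))
      = (\<Sum>\<mu>\<in>?P p. \<Sum>\<nu>\<in>?P q. of_int (sign \<sigma>) * ((of_int (sign \<mu>) *
          (\<Prod>a<p. if f (\<sigma> (\<mu> a)) = s ! a then 1 else 0)) * (of_int (sign \<nu>) *
          (\<Prod>a<q. if f (\<sigma> (\<nu> a + p)) = t ! a then 1 else 0))))"
      unfolding basic_form_def by (simp add: sum_distrib_left sum_distrib_right mult.assoc) (rule sum.swap)
    also have "\<dots> = (\<Sum>\<mu>\<in>?P p. \<Sum>\<nu>\<in>?P q. H (\<sigma> \<circ> gam p q \<mu> \<nu>))"
    proof (intro sum.cong refl)
      fix \<mu> \<nu> assume m: "\<mu> \<in> ?P p" and v: "\<nu> \<in> ?P q"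
      note g = gam_props[of \<mu> p \<nu> q]
      have perm: "permutation \<sigma>" "permutation (gam p q \<mu> \<nu>)"
        using sp g m v permutes_imp_permutation[OF finite_atLeastLessThan] by auto
      have ms: "\<And>a. a < p \<Longrightarrow> \<mu> a < p" using m permutes_in_image by fastforce
      have "(\<Prod>a<p+q. if f ((\<sigma> \<circ> gam p q \<mu> \<nu>) a) = (s @ t) ! a then 1 else (0::complex))
        = (\<Prod>a<p. if f (\<sigma> (\<mu> a)) = s ! a then 1 else 0) *
          (\<Prod>a<q. if f (\<sigma> (\<nu> a + p)) = t ! a then 1 else 0)"
        unfolding prod_split_add using assms by (simp add: gam_def nth_append)
      then show "of_int (sign \<sigma>) * ((of_int (sign \<mu>) *
          (\<Prod>a<p. if f (\<sigma> (\<mu> a)) = s ! a then 1 else 0)) * (of_int (sign \<nu>) *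
          (\<Prod>a<q. if f (\<sigma> (\<nu> a + p)) = t ! a then 1 else 0))) = H (\<sigma> \<circ> gam p q \<mu> \<nu>)"
        unfolding H_def using g m v perm by (simp add: sign_compose mult_ac)
    qed
    finally show ?thesis .
  qed
  have "wedge p q (basic_form p s) (basic_form q t) f
      = 1 / of_nat (fact p * fact q) * (\<Sum>\<sigma>\<in>?P (p + q). \<Sum>\<mu>\<in>?P p. \<Sum>\<nu>\<in>?P q. H (\<sigma> \<circ> gam p q \<mu> \<nu>))"
    unfolding wedge_def using key by simp
  also have "(\<Sum>\<sigma>\<in>?P (p + q). \<Sum>\<mu>\<in>?P p. \<Sum>\<nu>\<in>?P q. H (\<sigma> \<circ> gam p q \<mu> \<nu>))
      = (\<Sum>\<mu>\<in>?P p. \<Sum>\<nu>\<in>?P q. \<Sum>\<sigma>\<in>?P (p + q). H (\<sigma> \<circ> gam p q \<mu> \<nu>))"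
    by (subst sum.swap) (rule sum.cong[OF refl], rule sum.swap)
  also have "\<dots> = (\<Sum>\<mu>\<in>?P p. \<Sum>\<nu>\<in>?P q. \<Sum>\<sigma>\<in>?P (p + q). H \<sigma>)"
  proof -
    have gen: "(\<Sum>\<sigma>\<in>?P (p + q). H (\<sigma> \<circ> gam p q \<mu> \<nu>)) = (\<Sum>\<sigma>\<in>?P (p + q). H \<sigma>)"
      if "\<mu> \<in> ?P p" "\<nu> \<in> ?P q" for \<mu> \<nu>
    proof -
      have "gam p q \<mu> \<nu> permutes {0..<p+q}" using gam_props that by auto
      then show ?thesis by (rule sum_permutations_compose_right[symmetric])
    qed
    show ?thesis by (rule sum.cong[OF refl], rule sum.cong[OF refl], rule gen) auto
  qed
  also have "\<dots> = of_nat (fact p * fact q) * basic_form (p + q) (s @ t) f"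
    by (simp add: card_permutations H_def basic_form_def)
  finally show ?thesis by simp
qed


type_synonym cf = "nat set \<times> nat set \<Rightarrow> complex"

definition Up :: "nat \<Rightarrow> cf \<Rightarrow> cf" where
  "Up n c x = (if fst x \<subseteq> {..<n} \<and> snd x \<subseteq> {..<n}
     then (\<Sum>i\<in>fst x \<inter> snd x. c (fst x - {i}, snd x - {i})) else 0)"

definition Dn :: "nat \<Rightarrow> cf \<Rightarrow> cf" where
  "Dn n c x = (if fst x \<subseteq> {..<n} \<and> snd x \<subseteq> {..<n}
     then (\<Sum>i\<in>{..<n} - (fst x \<union> snd x). c (insert i (fst x), insert i (snd x))) else 0)"

definition lev :: "nat \<Rightarrow> int \<Rightarrow> int \<Rightarrow> cf \<Rightarrow> bool" where
  "lev n s t c = (\<forall>A B. c (A, B) \<noteq> 0 \<longrightarrow> A \<subseteq> {..<n} \<and> B \<subseteq> {..<n} \<and>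
      int (card A) + int (card B) = s \<and> int (card A) - int (card B) = t)"

definition PP :: "nat \<Rightarrow> (nat set \<times> nat set) set" where
  "PP n = Pow {..<n} \<times> Pow {..<n}"

lemma finite_PP: "finite (PP n)" by (simp add: PP_def)

lemma Up_sum: "Up n (\<lambda>x. \<Sum>r\<in>R. a r * f r x) = (\<lambda>x. \<Sum>r\<in>R. a r * Up n (f r) x)"
proof (rule ext)
  fix x
  show "Up n (\<lambda>x. \<Sum>r\<in>R. a r * f r x) x = (\<Sum>r\<in>R. a r * Up n (f r) x)"
  proof (cases "fst x \<subseteq> {..<n} \<and> snd x \<subseteq> {..<n}")
    case True
    then show ?thesis unfolding Up_def using True by (simp add: sum_distrib_left) (rule sum.swap)
  next
    case False
    then show ?thesis by (simp only: Up_def if_not_P[OF False]) simp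
  qed
qed

lemma Dn_sum: "Dn n (\<lambda>x. \<Sum>r\<in>R. a r * f r x) = (\<lambda>x. \<Sum>r\<in>R. a r * Dn n (f r) x)"
proof (rule ext)
  fix x
  show "Dn n (\<lambda>x. \<Sum>r\<in>R. a r * f r x) x = (\<Sum>r\<in>R. a r * Dn n (f r) x)"
  proof (cases "fst x \<subseteq> {..<n} \<and> snd x \<subseteq> {..<n}")
    case True
    then show ?thesis unfolding Dn_def using True by (simp add: sum_distrib_left) (rule sum.swap)
  next
    case False
    then show ?thesis by (simp only: Dn_def if_not_P[OF False]) simp
  qed
qed

lemma Up_add: "Up n (\<lambda>x. f x + g x) = (\<lambda>x. Up n f x + Up n g x)"
  by (auto simp: Up_def fun_eq_iff sum.distrib)

lemma Up_scale: "Up n (\<lambda>x. a * f x) = (\<lambda>x. a * Up n f x)"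
  by (auto simp: Up_def fun_eq_iff sum_distrib_left)

lemma Up_zero: "Up n (\<lambda>x. 0) = (\<lambda>x. 0)"
  by (auto simp: Up_def fun_eq_iff)

lemma Upow_zero: "(Up n ^^ r) (\<lambda>x. 0) = (\<lambda>x. 0)"
  by (induction r) (auto simp: Up_zero)

lemma lev_Up:
  assumes "lev n s t c"
  shows "lev n (s + 2) t (Up n c)"
  unfolding lev_def
proof (intro allI impI)
  fix A B assume ne: "Up n c (A, B) \<noteq> 0"
  then have sub: "A \<subseteq> {..<n}" "B \<subseteq> {..<n}" by (auto simp: Up_def split: if_splits)
  then have fin: "finite A" "finite B" using finite_subset by auto
  have "(\<Sum>i\<in>A \<inter> B. c (A - {i}, B - {i})) \<noteq> 0" using ne sub by (simp add: Up_def)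
  from sum.not_neutral_contains_not_neutral[OF this] obtain i
    where i: "i \<in> A \<inter> B" "c (A - {i}, B - {i}) \<noteq> 0" by blast
  have st: "int (card (A - {i})) + int (card (B - {i})) = s" "int (card (A - {i})) - int (card (B - {i})) = t"
    using assms i(2) unfolding lev_def by blast+
  have "card A \<ge> 1" "card B \<ge> 1" using i fin by (auto simp: Suc_le_eq card_gt_0_iff)
  moreover have "card (A - {i}) = card A - 1" "card (B - {i}) = card B - 1"
    using i fin by (auto simp: card_Diff_singleton)
  ultimately have cd: "card (A - {i}) + 1 = card A" "card (B - {i}) + 1 = card B" by auto
  show "A \<subseteq> {..<n} \<and> B \<subseteq> {..<n} \<and> int (card A) + int (card B) = s + 2 \<and> int (card A) - int (card B) = t"
    using sub st cd by linarith
qed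

lemma lev_Dn:
  assumes "lev n s t c"
  shows "lev n (s - 2) t (Dn n c)"
  unfolding lev_def
proof (intro allI impI)
  fix A B assume ne: "Dn n c (A, B) \<noteq> 0"
  then have sub: "A \<subseteq> {..<n}" "B \<subseteq> {..<n}" by (auto simp: Dn_def split: if_splits)
  then have fin: "finite A" "finite B" using finite_subset by auto
  have "(\<Sum>i\<in>{..<n} - (A \<union> B). c (insert i A, insert i B)) \<noteq> 0" using ne sub by (simp add: Dn_def)
  from sum.not_neutral_contains_not_neutral[OF this] obtain i
    where i: "i \<in> {..<n} - (A \<union> B)" "c (insert i A, insert i B) \<noteq> 0" by blast
  then have "int (card (insert i A)) + int (card (insert i B)) = s" "int (card (insert i A)) - int (card (insert i B)) = t"
    using assms i(2) unfolding lev_def by blast+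
  moreover have "card (insert i A) = card A + 1" "card (insert i B) = card B + 1"
    using i fin by auto
  ultimately show "A \<subseteq> {..<n} \<and> B \<subseteq> {..<n} \<and> int (card A) + int (card B) = s - 2 \<and> int (card A) - int (card B) = t"
    using sub by linarith
qed

lemma lev_Upow: "lev n s t c \<Longrightarrow> lev n (s + 2 * int r) t ((Up n ^^ r) c)"
proof (induction r)
  case 0 then show ?case by simp
next
  case (Suc r)
  then have "lev n (s + 2 * int r + 2) t (Up n ((Up n ^^ r) c))" using lev_Up by blast
  then show ?case by (simp add: algebra_simps)
qed

lemma lev_Dpow: "lev n s t c \<Longrightarrow> lev n (s - 2 * int r) t ((Dn n ^^ r) c)"
proof (induction r)
  case 0 then show ?case by simp
next
  case (Suc r)
  then have "lev n (s - 2 * int r - 2) t (Dn n ((Dn n ^^ r) c))" using lev_Dn by blast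
  then show ?case by (simp add: algebra_simps)
qed

lemma lev_neg: "lev n s t c \<Longrightarrow> s < 0 \<Longrightarrow> c = (\<lambda>x. 0)"
  unfolding lev_def fun_eq_iff by (metis not_less of_nat_add of_nat_0_le_iff surj_pair)

lemma lev_sum:
  assumes "\<And>r. r \<in> R \<Longrightarrow> lev n s t (f r)"
  shows "lev n s t (\<lambda>x. \<Sum>r\<in>R. a r * f r x)"
  unfolding lev_def
proof (intro allI impI)
  fix A B assume "(\<Sum>r\<in>R. a r * f r (A, B)) \<noteq> 0"
  from sum.not_neutral_contains_not_neutral[OF this] obtain r where r: "r \<in> R" "a r * f r (A, B) \<noteq> 0" by blast
  then have "f r (A, B) \<noteq> 0" by simp
  then show "A \<subseteq> {..<n} \<and> B \<subseteq> {..<n} \<and> int (card A) + int (card B) = s \<and> int (card A) - int (card B) = t"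
    using assms[OF r(1)] unfolding lev_def by blast
qed

lemma comm:
  assumes "lev n s t c"
  shows "Dn n (Up n c) x = Up n (Dn n c) x + of_int (int n - s) * c x"
proof -
  obtain A B where x: "x = (A, B)" by (cases x)
  show ?thesis
  proof (cases "A \<subseteq> {..<n} \<and> B \<subseteq> {..<n}")
    case False
    have "c x = 0"
    proof (rule ccontr)
      assume "c x \<noteq> 0"
      then show False using assms x False unfolding lev_def by blast
    qed
    then show ?thesis by (simp only: x Up_def Dn_def fst_conv snd_conv if_not_P[OF False]) simp
  next
    case True
    then have sub: "A \<subseteq> {..<n}" "B \<subseteq> {..<n}" by auto
    then have fin: "finite A" "finite B" using finite_subset by auto
    let ?F = "{..<n} - (A \<union> B)" and ?C = "A \<inter> B"
    have "Dn n (Up n c) x = (\<Sum>i\<in>?F. \<Sum>j\<in>insert i ?C. c (insert i A - {j}, insert i B - {j}))"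
      using sub x by (auto simp: Dn_def Up_def intro!: sum.cong)
    also have "\<dots> = (\<Sum>i\<in>?F. c (A, B) + (\<Sum>j\<in>?C. c (insert i A - {j}, insert i B - {j})))"
    proof (rule sum.cong[OF refl])
      fix i assume i: "i \<in> ?F"
      then have "i \<notin> ?C" by auto
      moreover have "insert i A - {i} = A" "insert i B - {i} = B" using i by auto
      ultimately show "(\<Sum>j\<in>insert i ?C. c (insert i A - {j}, insert i B - {j})) =
          c (A, B) + (\<Sum>j\<in>?C. c (insert i A - {j}, insert i B - {j}))"
        using fin by (simp add: sum.insert)
    qed
    also have "\<dots> = of_nat (card ?F) * c (A, B) + (\<Sum>i\<in>?F. \<Sum>j\<in>?C. c (insert i A - {j}, insert i B - {j}))"
      by (simp add: sum.distrib)
    finally have L: "Dn n (Up n c) x = of_nat (card ?F) * c (A, B) + (\<Sum>i\<in>?F. \<Sum>j\<in>?C. c (insert i A - {j}, insert i B - {j}))" .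
    have "Up n (Dn n c) x = (\<Sum>j\<in>?C. \<Sum>i\<in>insert j ?F. c (insert i (A - {j}), insert i (B - {j})))"
    proof -
      have "\<And>j. j \<in> ?C \<Longrightarrow> {..<n} - (A - {j} \<union> (B - {j})) = insert j ?F" using sub by auto
      then show ?thesis using sub x by (auto simp: Dn_def Up_def intro!: sum.cong)
    qed
    also have "\<dots> = (\<Sum>j\<in>?C. c (A, B) + (\<Sum>i\<in>?F. c (insert i A - {j}, insert i B - {j})))"
    proof (rule sum.cong[OF refl])
      fix j assume j: "j \<in> ?C"
      then have "j \<notin> ?F" by auto
      moreover have "insert j (A - {j}) = A" "insert j (B - {j}) = B" using j by auto
      moreover have "\<And>i. i \<in> ?F \<Longrightarrow> insert i (A - {j}) = insert i A - {j} \<and> insert i (B - {j}) = insert i B - {j}"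
        using j by auto
      ultimately show "(\<Sum>i\<in>insert j ?F. c (insert i (A - {j}), insert i (B - {j}))) =
          c (A, B) + (\<Sum>i\<in>?F. c (insert i A - {j}, insert i B - {j}))"
        by (simp add: sum.insert)
    qed
    also have "\<dots> = of_nat (card ?C) * c (A, B) + (\<Sum>i\<in>?F. \<Sum>j\<in>?C. c (insert i A - {j}, insert i B - {j}))"
      by (simp add: sum.distrib sum.swap[of _ ?C])
    finally have R: "Up n (Dn n c) x = of_nat (card ?C) * c (A, B) + (\<Sum>i\<in>?F. \<Sum>j\<in>?C. c (insert i A - {j}, insert i B - {j}))" .
    have cc: "c (A, B) \<noteq> 0 \<Longrightarrow> int (card ?F) = int (card ?C) + (int n - s)"
    proof -
      assume "c (A, B) \<noteq> 0"
      then have s: "int (card A) + int (card B) = s" using assms by (auto simp: lev_def)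
      have "card ?F = n - card (A \<union> B)" using sub by (simp add: card_Diff_subset fin)
      moreover have "card (A \<union> B) + card ?C = card A + card B" using card_Un_Int fin by metis
      moreover have "card (A \<union> B) \<le> n" using sub card_mono[of "{..<n}" "A \<union> B"] by auto
      ultimately show ?thesis using s by linarith
    qed
    show ?thesis
    proof (cases "c (A, B) = 0")
      case True then show ?thesis using L R x by simp
    next
      case False
      have "of_nat (card ?F) = (of_nat (card ?C) + of_int (int n - s) :: complex)"
        using cc[OF False] by (metis of_int_add of_int_of_nat_eq)
      then have de: "(of_nat (card ?F) - of_nat (card ?C) :: complex) = of_int (int n - s)" by simp
      have "Dn n (Up n c) x = Up n (Dn n c) x + (of_nat (card ?F) - of_nat (card ?C)) * c (A, B)"
        using L R by (simp add: algebra_simps)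
      then show ?thesis using de x by simp
    qed
  qed
qed

lemma comm_pow:
  assumes "lev n s t v"
  shows "Dn n ((Up n ^^ r) v) x = (Up n ^^ r) (Dn n v) x
      + of_int (int r * (int n - s - int r + 1)) * (Up n ^^ (r - 1)) v x"
proof (induction r arbitrary: x)
  case 0 then show ?case by simp
next
  case (Suc r)
  have lr: "lev n (s + 2 * int r) t ((Up n ^^ r) v)" using lev_Upow[OF assms] .
  have "Dn n ((Up n ^^ Suc r) v) x = Dn n (Up n ((Up n ^^ r) v)) x" by simp
  also have "\<dots> = Up n (Dn n ((Up n ^^ r) v)) x + of_int (int n - (s + 2 * int r)) * (Up n ^^ r) v x"
    by (rule comm[OF lr])
  also have "Dn n ((Up n ^^ r) v) = (\<lambda>x. (Up n ^^ r) (Dn n v) x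
      + of_int (int r * (int n - s - int r + 1)) * (Up n ^^ (r - 1)) v x)"
    using Suc.IH by (simp add: fun_eq_iff)
  also have "Up n \<dots> x = (Up n ^^ Suc r) (Dn n v) x + of_int (int r * (int n - s - int r + 1)) * (Up n ^^ r) v x"
  proof (cases r)
    case 0 then show ?thesis by (simp add: Up_add Up_scale)
  next
    case (Suc r') then show ?thesis by (simp add: Up_add Up_scale)
  qed
  finally show ?case by (simp add: algebra_simps)
qed


lemma reidx:
  "(\<Sum>x\<in>PP n. \<Sum>i\<in>fst x \<inter> snd x. F (fst x) (snd x) i)
 = (\<Sum>x\<in>PP n. \<Sum>i\<in>{..<n} - (fst x \<union> snd x). F (insert i (fst x)) (insert i (snd x)) i)"
proof -
  have fin: "finite (PP n)" by (rule finite_PP)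
  have f1: "\<forall>x\<in>PP n. finite (fst x \<inter> snd x)" by (auto simp: PP_def intro: finite_subset)
  have "(\<Sum>x\<in>PP n. \<Sum>i\<in>fst x \<inter> snd x. F (fst x) (snd x) i)
      = (\<Sum>y\<in>Sigma (PP n) (\<lambda>x. fst x \<inter> snd x). F (fst (fst y)) (snd (fst y)) (snd y))"
    using sum.Sigma[OF fin f1, of "\<lambda>x i. F (fst x) (snd x) i"] by (simp add: split_def)
  also have "\<dots> = (\<Sum>y\<in>Sigma (PP n) (\<lambda>x. {..<n} - (fst x \<union> snd x)).
       F (insert (snd y) (fst (fst y))) (insert (snd y) (snd (fst y))) (snd y))"
  proof (rule sum.reindex_bij_witness[where j="\<lambda>y. ((fst (fst y) - {snd y}, snd (fst y) - {snd y}), snd y)"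
        and i="\<lambda>y. ((insert (snd y) (fst (fst y)), insert (snd y) (snd (fst y))), snd y)"])
    fix y assume y: "y \<in> Sigma (PP n) (\<lambda>x. fst x \<inter> snd x)"
    obtain A B i where yy: "y = ((A, B), i)" by (metis prod.collapse)
    show "((insert (snd ((fst (fst y) - {snd y}, snd (fst y) - {snd y}), snd y))
             (fst (fst ((fst (fst y) - {snd y}, snd (fst y) - {snd y}), snd y))),
           insert (snd ((fst (fst y) - {snd y}, snd (fst y) - {snd y}), snd y))
             (snd (fst ((fst (fst y) - {snd y}, snd (fst y) - {snd y}), snd y)))),
          snd ((fst (fst y) - {snd y}, snd (fst y) - {snd y}), snd y)) = y"
      using y yy by auto
    show "((fst (fst y) - {snd y}, snd (fst y) - {snd y}), snd y) \<in> Sigma (PP n) (\<lambda>x. {..<n} - (fst x \<union> snd x))"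
      using y yy by (auto simp: PP_def)
    show "F (insert (snd ((fst (fst y) - {snd y}, snd (fst y) - {snd y}), snd y))
             (fst (fst ((fst (fst y) - {snd y}, snd (fst y) - {snd y}), snd y))))
          (insert (snd ((fst (fst y) - {snd y}, snd (fst y) - {snd y}), snd y))
             (snd (fst ((fst (fst y) - {snd y}, snd (fst y) - {snd y}), snd y))))
          (snd ((fst (fst y) - {snd y}, snd (fst y) - {snd y}), snd y))
        = F (fst (fst y)) (snd (fst y)) (snd y)"
      using y yy by (auto simp: insert_absorb)
  next
    fix y assume y: "y \<in> Sigma (PP n) (\<lambda>x. {..<n} - (fst x \<union> snd x))"
    obtain A B i where yy: "y = ((A, B), i)" by (metis prod.collapse)
    show "((fst (fst ((insert (snd y) (fst (fst y)), insert (snd y) (snd (fst y))), snd y)) -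
             {snd ((insert (snd y) (fst (fst y)), insert (snd y) (snd (fst y))), snd y)},
           snd (fst ((insert (snd y) (fst (fst y)), insert (snd y) (snd (fst y))), snd y)) -
             {snd ((insert (snd y) (fst (fst y)), insert (snd y) (snd (fst y))), snd y)}),
          snd ((insert (snd y) (fst (fst y)), insert (snd y) (snd (fst y))), snd y)) = y"
      using y yy by auto
    show "((insert (snd y) (fst (fst y)), insert (snd y) (snd (fst y))), snd y) \<in> Sigma (PP n) (\<lambda>x. fst x \<inter> snd x)"
      using y yy by (auto simp: PP_def)
  qed
  also have "\<dots> = (\<Sum>x\<in>PP n. \<Sum>i\<in>{..<n} - (fst x \<union> snd x). F (insert i (fst x)) (insert i (snd x)) i)"
    using sum.Sigma[OF fin, of "\<lambda>x. {..<n} - (fst x \<union> snd x)" "\<lambda>x i. F (insert i (fst x)) (insert i (snd x)) i"]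
    by (simp add: split_def)
  finally show ?thesis .
qed

definition ip :: "nat \<Rightarrow> cf \<Rightarrow> cf \<Rightarrow> complex" where
  "ip n x y = (\<Sum>z\<in>PP n. x z * cnj (y z))"

lemma adj: "ip n (Up n x) y = ip n x (Dn n y)"
proof -
  have "ip n (Up n x) y = (\<Sum>z\<in>PP n. \<Sum>i\<in>fst z \<inter> snd z. x (fst z - {i}, snd z - {i}) * cnj (y z))"
    unfolding ip_def by (intro sum.cong refl) (auto simp: Up_def PP_def sum_distrib_right)
  also have "\<dots> = (\<Sum>z\<in>PP n. \<Sum>i\<in>{..<n} - (fst z \<union> snd z).
      x (insert i (fst z) - {i}, insert i (snd z) - {i}) * cnj (y (insert i (fst z), insert i (snd z))))"
    using reidx[where n=n and F="\<lambda>A B i. x (A - {i}, B - {i}) * cnj (y (A, B))"] by simp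
  also have "\<dots> = ip n x (Dn n y)"
    unfolding ip_def
  proof (intro sum.cong refl)
    fix z assume z: "z \<in> PP n"
    have "\<And>i. i \<in> {..<n} - (fst z \<union> snd z) \<Longrightarrow> insert i (fst z) - {i} = fst z \<and> insert i (snd z) - {i} = snd z"
      by auto
    then have "(\<Sum>i\<in>{..<n} - (fst z \<union> snd z).
      x (insert i (fst z) - {i}, insert i (snd z) - {i}) * cnj (y (insert i (fst z), insert i (snd z))))
      = (\<Sum>i\<in>{..<n} - (fst z \<union> snd z). x z * cnj (y (insert i (fst z), insert i (snd z))))"
      by (intro sum.cong refl) simp
    also have "\<dots> = x z * cnj (Dn n y z)"
    proof -
      have "fst z \<subseteq> {..<n}" "snd z \<subseteq> {..<n}" using z by (auto simp: PP_def mem_Times_iff)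
      then show ?thesis by (simp add: Dn_def sum_distrib_left)
    qed
    finally show "(\<Sum>i\<in>{..<n} - (fst z \<union> snd z).
      x (insert i (fst z) - {i}, insert i (snd z) - {i}) * cnj (y (insert i (fst z), insert i (snd z))))
      = x z * cnj (Dn n y z)" .
  qed
  finally show ?thesis .
qed

lemma ip_zero:
  assumes "ip n x x = 0" "z \<in> PP n"
  shows "x z = 0"
proof -
  have e: "\<And>z. x z * cnj (x z) = complex_of_real ((cmod (x z))\<^sup>2)"
    by (rule complex_norm_square[symmetric])
  have "(\<Sum>z\<in>PP n. complex_of_real ((cmod (x z))\<^sup>2)) = 0"
    using assms(1) unfolding ip_def e .
  then have "(\<Sum>z\<in>PP n. (cmod (x z))\<^sup>2) = 0"
    by (metis of_real_eq_0_iff of_real_sum)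
  moreover have "\<forall>z\<in>PP n. 0 \<le> (cmod (x z))\<^sup>2" by simp
  ultimately have "\<forall>z\<in>PP n. (cmod (x z))\<^sup>2 = 0"
    by (simp add: sum_nonneg_eq_0_iff[OF finite_PP])
  then show ?thesis using assms(2) by simp
qed

definition acoef :: "nat \<Rightarrow> complex" where
  "acoef r = (-1) ^ r / of_nat (fact r * fact (Suc r))"

lemma div_cancel_aux: "(P::complex) \<noteq> 0 \<Longrightarrow> x / (P * Q) * P = x / Q"
  by (cases "Q = 0") (simp_all add: field_simps)

lemma acoef_rec: "acoef (Suc r) * of_nat (Suc r * Suc (Suc r)) = - acoef r"
proof -
  have e: "fact (Suc r) * fact (Suc (Suc r)) = (Suc r * Suc (Suc r)) * (fact r * fact (Suc r) :: nat)"
    by (simp add: algebra_simps)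
  have nz: "(of_nat (Suc r * Suc (Suc r)) :: complex) \<noteq> 0" by (metis of_nat_eq_0_iff mult_is_0 nat.distinct(1))
  have "acoef (Suc r) * of_nat (Suc r * Suc (Suc r))
      = (-1) ^ Suc r / (of_nat (Suc r * Suc (Suc r)) * of_nat (fact r * fact (Suc r))) * of_nat (Suc r * Suc (Suc r))"
    unfolding acoef_def e of_nat_mult[of "Suc r * Suc (Suc r)"] ..
  also have "\<dots> = (-1) ^ Suc r / of_nat (fact r * fact (Suc r))" by (rule div_cancel_aux[OF nz])
  also have "\<dots> = - acoef r" by (simp add: acoef_def)
  finally show ?thesis .
qed


lemma construct:
  assumes "lev n (int n) t d"
  shows "\<exists>c \<sigma>. lev n (int n) t c \<and> Up n c = (\<lambda>_. 0) \<and> c = (\<lambda>x. d x + Up n \<sigma> x) \<and> lev n (int n - 2) t \<sigma>"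
proof -
  define D where "D r = (Dn n ^^ r) d" for r
  have levD: "lev n (int n - 2 * int r) t (D r)" for r unfolding D_def by (rule lev_Dpow[OF assms])
  have D0: "D (Suc n) = (\<lambda>_. 0)" by (rule lev_neg[OF levD]) simp
  have DS: "Dn n (D r) = D (Suc r)" for r by (simp add: D_def)
  define c where "c = (\<lambda>x. \<Sum>r\<in>{..n}. acoef r * (Up n ^^ r) (D r) x)"
  define \<sigma> where "\<sigma> = (\<lambda>x. \<Sum>r\<in>{Suc 0..n}. acoef r * (Up n ^^ (r - 1)) (D r) x)"
  have levc: "lev n (int n) t c" unfolding c_def
  proof (rule lev_sum)
    fix r
    have "lev n (int n - 2 * int r + 2 * int r) t ((Up n ^^ r) (D r))" by (rule lev_Upow[OF levD])
    then show "lev n (int n) t ((Up n ^^ r) (D r))" by simp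
  qed
  have levs: "lev n (int n - 2) t \<sigma>" unfolding \<sigma>_def
  proof (rule lev_sum)
    fix r assume "r \<in> {Suc 0..n}"
    then have r: "r \<ge> 1" by simp
    have "lev n (int n - 2 * int r + 2 * int (r - 1)) t ((Up n ^^ (r - 1)) (D r))" by (rule lev_Upow[OF levD])
    moreover have "int n - 2 * int r + 2 * int (r - 1) = int n - 2" using r by simp
    ultimately show "lev n (int n - 2) t ((Up n ^^ (r - 1)) (D r))" by simp
  qed
  have ceq: "c = (\<lambda>x. d x + Up n \<sigma> x)"
  proof
    fix x
    have "Up n \<sigma> x = (\<Sum>r\<in>{Suc 0..n}. acoef r * Up n ((Up n ^^ (r - 1)) (D r)) x)"
      unfolding \<sigma>_def Up_sum ..
    also have "\<dots> = (\<Sum>r\<in>{Suc 0..n}. acoef r * (Up n ^^ r) (D r) x)"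
    proof (rule sum.cong[OF refl])
      fix r assume "r \<in> {Suc 0..n}"
      then have "r = Suc (r - 1)" by auto
      then have "(Up n ^^ r) (D r) = Up n ((Up n ^^ (r - 1)) (D r))" by (metis funpow.simps(2) o_apply)
      then show "acoef r * Up n ((Up n ^^ (r - 1)) (D r)) x = acoef r * (Up n ^^ r) (D r) x" by simp
    qed
    finally have u: "Up n \<sigma> x = (\<Sum>r\<in>{Suc 0..n}. acoef r * (Up n ^^ r) (D r) x)" .
    have "{..n} = insert 0 {Suc 0..n}" by auto
    then have "c x = acoef 0 * (Up n ^^ 0) (D 0) x + (\<Sum>r\<in>{Suc 0..n}. acoef r * (Up n ^^ r) (D r) x)"
      unfolding c_def by (simp add: sum.insert)
    also have "\<dots> = d x + Up n \<sigma> x" using u by (simp add: acoef_def D_def)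
    finally show "c x = d x + Up n \<sigma> x" .
  qed
  have Dc: "Dn n c = (\<lambda>_. 0)"
  proof
    fix x
    define u where "u r = (Up n ^^ r) (D (Suc r)) x" for r
    have "Dn n c x = (\<Sum>r\<in>{..n}. acoef r * Dn n ((Up n ^^ r) (D r)) x)"
      unfolding c_def Dn_sum ..
    also have "\<dots> = (\<Sum>r\<in>{..n}. acoef r * u r + acoef r * of_nat (r * Suc r) * (Up n ^^ (r - 1)) (D r) x)"
    proof (rule sum.cong[OF refl])
      fix r
      have "Dn n ((Up n ^^ r) (D r)) x = (Up n ^^ r) (Dn n (D r)) x
          + of_int (int r * (int n - (int n - 2 * int r) - int r + 1)) * (Up n ^^ (r - 1)) (D r) x"
        by (rule comm_pow[OF levD])
      also have "int r * (int n - (int n - 2 * int r) - int r + 1) = int (r * Suc r)" by (simp add: algebra_simps)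
      finally show "acoef r * Dn n ((Up n ^^ r) (D r)) x = acoef r * u r + acoef r * of_nat (r * Suc r) * (Up n ^^ (r - 1)) (D r) x"
        by (simp add: DS u_def algebra_simps)
    qed
    also have "\<dots> = (\<Sum>r\<in>{..n}. acoef r * u r) + (\<Sum>r\<in>{..n}. acoef r * of_nat (r * Suc r) * (Up n ^^ (r - 1)) (D r) x)"
      by (rule sum.distrib)
    also have "(\<Sum>r\<in>{..n}. acoef r * of_nat (r * Suc r) * (Up n ^^ (r - 1)) (D r) x) = (\<Sum>r<n. - acoef r * u r)"
    proof -
      have "(\<Sum>r\<in>{..n}. acoef r * of_nat (r * Suc r) * (Up n ^^ (r - 1)) (D r) x)
          = (\<Sum>r<Suc n. acoef r * of_nat (r * Suc r) * (Up n ^^ (r - 1)) (D r) x)"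
        by (simp add: lessThan_Suc_atMost)
      also have "\<dots> = (\<Sum>r<n. acoef (Suc r) * of_nat (Suc r * Suc (Suc r)) * (Up n ^^ r) (D (Suc r)) x)"
        by (subst sum.lessThan_Suc_shift) simp
      also have "\<dots> = (\<Sum>r<n. - acoef r * u r)"
        by (intro sum.cong refl) (simp only: acoef_rec u_def)
      finally show ?thesis .
    qed
    also have "(\<Sum>r\<in>{..n}. acoef r * u r) = (\<Sum>r<n. acoef r * u r) + acoef n * u n"
      by (simp add: lessThan_Suc_atMost[symmetric])
    also have "u n = 0" by (simp add: u_def D0 Upow_zero)
    finally show "Dn n c x = 0" by (simp add: sum_negf)
  qed
  have Uc: "Up n c = (\<lambda>_. 0)"
  proof
    fix z
    have "ip n (Up n c) (Up n c) = ip n c (Dn n (Up n c))" by (rule adj)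
    also have "Dn n (Up n c) = (\<lambda>x. Up n (Dn n c) x + of_int (int n - int n) * c x)"
      using comm[OF levc] by (simp add: fun_eq_iff)
    also have "\<dots> = (\<lambda>_. 0)" by (simp add: Dc Up_zero)
    finally have "ip n (Up n c) (Up n c) = 0" by (simp add: ip_def)
    show "Up n c z = 0"
    proof (cases "z \<in> PP n")
      case True then show ?thesis using ip_zero[OF \<open>ip n (Up n c) (Up n c) = 0\<close>] by blast
    next
      case False then show ?thesis by (auto simp: Up_def PP_def mem_Times_iff)
    qed
  qed
  show ?thesis using levc Uc ceq levs by blast
qed


lemma s_facts:
  fixes s :: "nat list" and n k :: nat
  assumes ds: "distinct s" "length s = n" "set s \<subseteq> {..<2*n}" "card {c. c < n \<and> n + c \<in> set s} = k"
  shows "set s = ({..<n} - {b. b < n \<and> b \<notin> set s}) \<union> (\<lambda>c. n + c) ` {c. c < n \<and> n + c \<in> set s}"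
    "card {b. b < n \<and> b \<notin> set s} = k"
proof -
  let ?I0 = "{b. b < n \<and> b \<notin> set s}" and ?Y = "{c. c < n \<and> n + c \<in> set s}"
  have finI: "finite ?I0" "finite ?Y" "?I0 \<subseteq> {..<n}" "?Y \<subseteq> {..<n}" by auto
  show ss: "set s = ({..<n} - ?I0) \<union> (\<lambda>c. n + c) ` ?Y"
  proof (intro set_eqI iffI)
    fix x assume x: "x \<in> set s"
    show "x \<in> ({..<n} - ?I0) \<union> (\<lambda>c. n + c) ` ?Y"
    proof (cases "x < n")
      case True then show ?thesis using x by auto
    next
      case False
      then have "x - n < n" "n + (x - n) = x" using x ds(3) by auto
      then show ?thesis using x by (auto simp: image_iff intro!: bexI[of _ "x - n"])
    qed
  qed auto
  have "n = card (set s)" using ds by (metis distinct_card)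
  also have "\<dots> = card ({..<n} - ?I0) + card ((\<lambda>c. n + c) ` ?Y)"
    by (subst ss, rule card_Un_disjoint) (auto simp: finI)
  also have "\<dots> = (n - card ?I0) + k" using finI ds(4) by (simp add: card_Diff_subset card_image)
  finally show "card ?I0 = k" using card_mono[OF _ finI(3)] by simp
qed

lemma C_nonzero:
  fixes s :: "nat list" and n k :: nat
  assumes ds: "distinct s" "length s = n" "set s \<subseteq> {..<2*n}" "card {c. c < n \<and> n + c \<in> set s} = k"
  shows "basic_form n s (gfun n (sorted_list_of_set {b. b < n \<and> b \<notin> set s})
            (sorted_list_of_set {c. c < n \<and> n + c \<in> set s})) \<noteq> 0"
proof -
  let ?I0 = "{b. b < n \<and> b \<notin> set s}" and ?Y = "{c. c < n \<and> n + c \<in> set s}"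
  note sf = s_facts[OF ds]
  have finI: "finite ?I0" "finite ?Y" "?I0 \<subseteq> {..<n}" "?Y \<subseteq> {..<n}" by auto
  have e1: "sorted_list_of_set ?I0 \<in> DL n k" using sf finI by (auto simp: DL_def)
  have e2: "sorted_list_of_set ?Y \<in> LL n k" using ds finI by (auto simp: LL_def)
  have im: "gfun n (sorted_list_of_set ?I0) (sorted_list_of_set ?Y) ` {..<n} = set s"
    using gfun_image[OF e1 e2] sf finI by simp
  have "card (gfun n (sorted_list_of_set ?I0) (sorted_list_of_set ?Y) ` {..<n}) = card {..<n}"
    unfolding im using ds by (simp add: distinct_card)
  then have inj: "inj_on (gfun n (sorted_list_of_set ?I0) (sorted_list_of_set ?Y)) {..<n}"
    by (simp add: inj_on_iff_eq_card)
  show ?thesis by (rule bf_nonzero[OF inj im ds(1,2)])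
qed

lemma dxdy_list:
  fixes n k :: nat and I J :: "nat set"
  assumes "I \<subseteq> {0..<n}" "J \<subseteq> {0..<n}" "card I = n - k" "card J = k" "k \<le> n"
  defines "s \<equiv> sorted_list_of_set I @ map (\<lambda>j. n + j) (sorted_list_of_set J)"
  shows "distinct s" "length s = n" "set s \<subseteq> {..<2*n}" "{c. c < n \<and> n + c \<in> set s} = J"
    "{b. b < n \<and> b \<notin> set s} = {b. b < n \<and> b \<notin> I}" "dxdy n I J = basic_form n s"
proof -
  have fin: "finite I" "finite J" using assms(1,2) finite_subset by auto
  have sI: "set (sorted_list_of_set I) = I" "set (sorted_list_of_set J) = J" using fin by auto
  show "distinct s" unfolding s_def using assms(1) fin by (auto simp: distinct_map inj_on_def)
  show "length s = n" unfolding s_def using assms fin by simp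
  show "set s \<subseteq> {..<2*n}" unfolding s_def using assms(1,2) sI by auto
  show "{c. c < n \<and> n + c \<in> set s} = J" unfolding s_def using assms(1,2) sI by auto
  show "{b. b < n \<and> b \<notin> set s} = {b. b < n \<and> b \<notin> I}" unfolding s_def using sI by auto
  show "dxdy n I J = basic_form n s" unfolding s_def dxdy_def by (rule ext) (rule refl)
qed

lemma il_list:
  fixes n k :: nat and A B :: "nat set"
  assumes "A \<subseteq> {..<n}" "B \<subseteq> {..<n}" "card A + card B = n" "card B = k"
  shows "distinct (il n A B)" "length (il n A B) = n" "set (il n A B) \<subseteq> {..<2*n}"
    "{c. c < n \<and> n + c \<in> set (il n A B)} = B"
    "{b. b < n \<and> b \<notin> set (il n A B)} = {b. b < n \<and> b \<notin> A}"
proof -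
  show "distinct (il n A B)" by (rule distinct_il)
  show "length (il n A B) = n" using length_il[OF assms(1,2)] assms by simp
  show "set (il n A B) \<subseteq> {..<2*n}" using set_il[OF assms(1,2)] assms(1,2) by auto
  show "{c. c < n \<and> n + c \<in> set (il n A B)} = B" using set_il[OF assms(1,2)] assms(1,2) by auto
  show "{b. b < n \<and> b \<notin> set (il n A B)} = {b. b < n \<and> b \<notin> A}" using set_il[OF assms(1,2)] by auto
qed

lemma wedge_lin:
  "wedge p q (\<lambda>g. \<Sum>i\<in>S. \<alpha> i g) (\<lambda>g. \<Sum>x\<in>T. c x * \<beta> x g) f
     = (\<Sum>i\<in>S. \<Sum>x\<in>T. c x * wedge p q (\<alpha> i) (\<beta> x) f)"
proof -
  let ?P = "{\<sigma>. \<sigma> permutes {0..<p + q}}" and ?K = "1 / of_nat (fact p * fact q) :: complex"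
  have "wedge p q (\<lambda>g. \<Sum>i\<in>S. \<alpha> i g) (\<lambda>g. \<Sum>x\<in>T. c x * \<beta> x g) f
      = ?K * (\<Sum>\<sigma>\<in>?P. \<Sum>i\<in>S. \<Sum>x\<in>T. c x * (of_int (sign \<sigma>) * \<alpha> i (f \<circ> \<sigma>) * \<beta> x (\<lambda>j. f (\<sigma> (j + p)))))"
    unfolding wedge_def by (simp add: sum_distrib_left sum_distrib_right mult_ac) (rule sum.cong[OF refl], rule sum.swap)
  also have "(\<Sum>\<sigma>\<in>?P. \<Sum>i\<in>S. \<Sum>x\<in>T. c x * (of_int (sign \<sigma>) * \<alpha> i (f \<circ> \<sigma>) * \<beta> x (\<lambda>j. f (\<sigma> (j + p)))))
      = (\<Sum>i\<in>S. \<Sum>x\<in>T. \<Sum>\<sigma>\<in>?P. c x * (of_int (sign \<sigma>) * \<alpha> i (f \<circ> \<sigma>) * \<beta> x (\<lambda>j. f (\<sigma> (j + p)))))"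
    by (subst sum.swap) (rule sum.cong[OF refl], rule sum.swap)
  finally show ?thesis
    unfolding wedge_def by (simp add: sum_distrib_left mult_ac)
qed


definition Idx :: "nat \<Rightarrow> nat \<Rightarrow> (nat set \<times> nat set) set" where
  "Idx n k = {(I, J). I \<subseteq> {0..<n} \<and> J \<subseteq> {0..<n} \<and> card I = n - k \<and> card J = k}"

definition Idx2 :: "nat \<Rightarrow> nat \<Rightarrow> (nat set \<times> nat set) set" where
  "Idx2 n k = {(\<alpha>, \<beta>). \<alpha> \<subseteq> {0..<n} \<and> \<beta> \<subseteq> {0..<n} \<and> card \<alpha> = k \<and> card \<beta> = k}"

definition comp :: "nat \<Rightarrow> nat set \<Rightarrow> nat set" where
  "comp n I = {b. b < n \<and> b \<notin> I}"

lemma card_comp: "I \<subseteq> {0..<n} \<Longrightarrow> card (comp n I) = n - card I"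
proof -
  assume a: "I \<subseteq> {0..<n}"
  have "comp n I = {0..<n} - I" by (auto simp: comp_def)
  then show ?thesis using a by (simp add: card_Diff_subset finite_subset)
qed

lemma comp_comp: "I \<subseteq> {0..<n} \<Longrightarrow> comp n (comp n I) = I"
  by (auto simp: comp_def)

lemma Idx_bij:
  assumes "k \<le> n"
  shows "bij_betw (\<lambda>x. (comp n (fst x), snd x)) (Idx n k) (Idx2 n k)"
proof (rule bij_betw_byWitness[where f'="\<lambda>y. (comp n (fst y), snd y)"])
  show "\<forall>x\<in>Idx n k. (comp n (fst (comp n (fst x), snd x)), snd (comp n (fst x), snd x)) = x"
    by (auto simp: Idx_def comp_comp)
  show "\<forall>y\<in>Idx2 n k. (comp n (fst (comp n (fst y), snd y)), snd (comp n (fst y), snd y)) = y"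
    by (auto simp: Idx2_def comp_comp)
  show "(\<lambda>x. (comp n (fst x), snd x)) ` Idx n k \<subseteq> Idx2 n k"
    using assms by (auto simp: Idx_def Idx2_def card_comp) (auto simp: comp_def)
  show "(\<lambda>y. (comp n (fst y), snd y)) ` Idx2 n k \<subseteq> Idx n k"
    using assms by (auto simp: Idx_def Idx2_def card_comp) (auto simp: comp_def)
qed

lemma finite_Idx: "finite (Idx n k)"
proof -
  have "Idx n k \<subseteq> Pow {0..<n} \<times> Pow {0..<n}" by (auto simp: Idx_def)
  then show ?thesis by (rule finite_subset) simp
qed

definition Cd :: "nat \<Rightarrow> nat set \<Rightarrow> nat set \<Rightarrow> complex" where
  "Cd n I J = basic_form n (sorted_list_of_set I @ map (\<lambda>j. n + j) (sorted_list_of_set J))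
      (gfun n (sorted_list_of_set (comp n I)) (sorted_list_of_set J))"

definition Ce :: "nat \<Rightarrow> nat set \<Rightarrow> nat set \<Rightarrow> complex" where
  "Ce n A B = basic_form n (il n A B) (gfun n (sorted_list_of_set (comp n A)) (sorted_list_of_set B))"

lemma Q_dxdy:
  assumes "(I, J) \<in> Idx n k" "k \<le> n"
  shows "Q_tau n k (dxdy n I J) W = Cd n I J * minor k W (comp n I) * minor k W J"
proof -
  have h: "I \<subseteq> {0..<n}" "J \<subseteq> {0..<n}" "card I = n - k" "card J = k" using assms by (auto simp: Idx_def)
  note dl = dxdy_list[OF h assms(2)]
  let ?s = "sorted_list_of_set I @ map (\<lambda>j. n + j) (sorted_list_of_set J)"
  have "Q_tau n k (basic_form n ?s) W
     = basic_form n ?s (gfun n (sorted_list_of_set {b. b < n \<and> b \<notin> set ?s})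
          (sorted_list_of_set {c. c < n \<and> n + c \<in> set ?s}))
       * minor k W {b. b < n \<and> b \<notin> set ?s} * minor k W {c. c < n \<and> n + c \<in> set ?s}"
    by (rule Q_bf) (use dl h in auto)
  then show ?thesis using dl by (simp add: Cd_def comp_def)
qed

lemma Q_il:
  assumes "A \<subseteq> {..<n}" "B \<subseteq> {..<n}" "card A + card B = n" "card B = k"
  shows "Q_tau n k (basic_form n (il n A B)) W = Ce n A B * minor k W (comp n A) * minor k W B"
proof -
  note dl = il_list[OF assms]
  let ?s = "il n A B"
  have "Q_tau n k (basic_form n ?s) W
     = basic_form n ?s (gfun n (sorted_list_of_set {b. b < n \<and> b \<notin> set ?s})
          (sorted_list_of_set {c. c < n \<and> n + c \<in> set ?s}))
       * minor k W {b. b < n \<and> b \<notin> set ?s} * minor k W {c. c < n \<and> n + c \<in> set ?s}"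
    by (rule Q_bf) (use dl assms in auto)
  then show ?thesis using dl by (simp add: Ce_def comp_def)
qed

lemma Ce_nz:
  assumes "A \<subseteq> {..<n}" "B \<subseteq> {..<n}" "card A + card B = n" "card B = k"
  shows "Ce n A B \<noteq> 0"
proof -
  note dl = il_list[OF assms]
  have "basic_form n (il n A B) (gfun n (sorted_list_of_set {b. b < n \<and> b \<notin> set (il n A B)})
            (sorted_list_of_set {c. c < n \<and> n + c \<in> set (il n A B)})) \<noteq> 0"
    by (rule C_nonzero) (use dl assms in auto)
  then show ?thesis using dl by (simp add: Ce_def comp_def)
qed


lemma Lambda_Idx: "Lambda n k = {\<tau>. \<exists>c. \<tau> = (\<lambda>f. \<Sum>x\<in>Idx n k. c x * dxdy n (fst x) (snd x) f)}"
  unfolding Lambda_def Idx_def by (simp add: split_def)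

lemma M2_Idx: "M2 n k = {Q. \<exists>c. Q = (\<lambda>W. \<Sum>y\<in>Idx2 n k. c y * minor k W (fst y) * minor k W (snd y))}"
  unfolding M2_def Idx2_def by (simp add: split_def)

lemma sub_dir:
  assumes "k \<le> n" "\<tau> \<in> PLambda n k"
  shows "Q_tau n k \<tau> \<in> M2 n k"
proof -
  have "\<tau> \<in> Lambda n k" using assms(2) by (simp add: PLambda_def)
  then obtain c where \<tau>: "\<tau> = (\<lambda>f. \<Sum>x\<in>Idx n k. c x * dxdy n (fst x) (snd x) f)"
    unfolding Lambda_Idx by blast
  define c' where "c' y = c (comp n (fst y), snd y) * Cd n (comp n (fst y)) (snd y)" for y
  have "Q_tau n k \<tau> = (\<lambda>W. \<Sum>y\<in>Idx2 n k. c' y * minor k W (fst y) * minor k W (snd y))"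
  proof
    fix W
    have "Q_tau n k \<tau> W = (\<Sum>x\<in>Idx n k. c x * Q_tau n k (dxdy n (fst x) (snd x)) W)"
      unfolding \<tau> by (rule Q_tau_lin[OF finite_Idx])
    also have "\<dots> = (\<Sum>x\<in>Idx n k. c x * (Cd n (fst x) (snd x) * minor k W (comp n (fst x)) * minor k W (snd x)))"
      by (intro sum.cong refl) (use Q_dxdy assms(1) in \<open>auto simp: split_def\<close>)
    also have "\<dots> = (\<Sum>x\<in>Idx n k. (\<lambda>y. c' y * minor k W (fst y) * minor k W (snd y)) (comp n (fst x), snd x))"
    proof (intro sum.cong refl)
      fix x assume "x \<in> Idx n k"
      then have "comp n (comp n (fst x)) = fst x" by (auto simp: Idx_def comp_comp)
      then show "c x * (Cd n (fst x) (snd x) * minor k W (comp n (fst x)) * minor k W (snd x))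
         = (\<lambda>y. c' y * minor k W (fst y) * minor k W (snd y)) (comp n (fst x), snd x)"
        by (simp add: c'_def)
    qed
    also have "\<dots> = (\<Sum>y\<in>Idx2 n k. c' y * minor k W (fst y) * minor k W (snd y))"
      by (rule sum.reindex_bij_betw[OF Idx_bij[OF assms(1)]])
    finally show "Q_tau n k \<tau> W = (\<Sum>y\<in>Idx2 n k. c' y * minor k W (fst y) * minor k W (snd y))" .
  qed
  then show ?thesis unfolding M2_Idx by blast
qed


lemma Idx_facts:
  assumes "x \<in> Idx n k" "k \<le> n"
  shows "fst x \<subseteq> {..<n}" "snd x \<subseteq> {..<n}" "card (fst x) + card (snd x) = n" "card (snd x) = k"
    "card (fst x) = n - k"
  using assms by (auto simp: Idx_def)

lemma PP_facts: "x \<in> PP n \<Longrightarrow> fst x \<subseteq> {..<n} \<and> snd x \<subseteq> {..<n}"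
  by (auto simp: PP_def mem_Times_iff)

lemma Idx_PP: "Idx n k \<subseteq> PP n"
  by (auto simp: Idx_def PP_def)

lemma sum_restrict_notin:
  fixes G :: "nat \<Rightarrow> complex"
  assumes "A \<subseteq> {..<n}" "B \<subseteq> {..<n}"
  shows "(\<Sum>i<n. if i \<in> A \<or> i \<in> B then 0 else G i) = (\<Sum>i\<in>{..<n} - (A \<union> B). G i)"
  by (rule sum.mono_neutral_cong_right) auto

lemma sup_dir:
  assumes k1: "1 \<le> k" and kn: "k \<le> n" and QM: "Q \<in> M2 n k"
  shows "Q \<in> Q_tau n k ` PLambda n k"
proof -
  obtain c where Q: "Q = (\<lambda>W. \<Sum>y\<in>Idx2 n k. c y * minor k W (fst y) * minor k W (snd y))"
    using QM unfolding M2_Idx by blast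
  define t where "t = int (n - k) - int k"
  define d where "d x = (if x \<in> Idx n k then c (comp n (fst x), snd x) / Ce n (fst x) (snd x) else 0)" for x
  have levd: "lev n (int n) t d"
    unfolding lev_def
  proof (intro allI impI)
    fix A B assume "d (A, B) \<noteq> 0"
    then have "(A, B) \<in> Idx n k" by (auto simp: d_def split: if_splits)
    note f = Idx_facts[OF this kn]
    show "A \<subseteq> {..<n} \<and> B \<subseteq> {..<n} \<and> int (card A) + int (card B) = int n \<and> int (card A) - int (card B) = t"
      using f kn by (auto simp: t_def)
  qed
  obtain c2 \<sigma> where c2: "lev n (int n) t c2" "Up n c2 = (\<lambda>_. 0)" "c2 = (\<lambda>x. d x + Up n \<sigma> x)"
      "lev n (int n - 2) t \<sigma>"
    using construct[OF levd] by blast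
  have supp: "x \<in> Idx n k" if "c2 x \<noteq> 0" for x
  proof -
    obtain A B where x: "x = (A, B)" by (cases x)
    have "A \<subseteq> {..<n}" "B \<subseteq> {..<n}" "int (card A) + int (card B) = int n" "int (card A) - int (card B) = t"
      using c2(1) that x unfolding lev_def by blast+
    then show ?thesis using kn x by (auto simp: Idx_def t_def)
  qed
  have supps: "fst x \<subseteq> {..<n} \<and> snd x \<subseteq> {..<n} \<and> card (fst x) + card (snd x) + 2 = n \<and> card (snd x) + 1 \<le> k"
    if "\<sigma> x \<noteq> 0" for x
  proof -
    obtain A B where x: "x = (A, B)" by (cases x)
    have "A \<subseteq> {..<n}" "B \<subseteq> {..<n}" "int (card A) + int (card B) = int n - 2" "int (card A) - int (card B) = t"
      using c2(4) that x unfolding lev_def by blast+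
    then show ?thesis using kn x by (auto simp: t_def)
  qed
  define e where "e x = basic_form n (il n (fst x) (snd x))" for x
  define \<tau> where "\<tau> = (\<lambda>f. \<Sum>x\<in>PP n. c2 x * e x f)"
  have "\<forall>x\<in>Idx n k. \<exists>\<epsilon>. e x = (\<lambda>f. \<epsilon> * dxdy n (fst x) (snd x) f)"
  proof
    fix x assume xi: "x \<in> Idx n k"
    note f = Idx_facts[OF xi kn]
    have h: "fst x \<subseteq> {0..<n}" "snd x \<subseteq> {0..<n}" "card (fst x) = n - k" "card (snd x) = k"
      using xi by (auto simp: Idx_def)
    note dl = dxdy_list[OF h kn]
    note il = il_list[OF f(1,2,3,4)]
    have "set (sorted_list_of_set (fst x) @ map (\<lambda>j. n + j) (sorted_list_of_set (snd x))) = set (il n (fst x) (snd x))"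
      using set_il[OF f(1,2)] h finite_subset[OF h(1)] finite_subset[OF h(2)] by auto
    then obtain \<epsilon> where "basic_form n (il n (fst x) (snd x)) = (\<lambda>f. \<epsilon> *
        basic_form n (sorted_list_of_set (fst x) @ map (\<lambda>j. n + j) (sorted_list_of_set (snd x))) f)"
      using bf_rearrange[OF dl(1) il(1) _ dl(2)] by blast
    then show "\<exists>\<epsilon>. e x = (\<lambda>f. \<epsilon> * dxdy n (fst x) (snd x) f)" using dl(6) by (auto simp: e_def)
  qed
  then obtain eps where eps: "\<And>x. x \<in> Idx n k \<Longrightarrow> e x = (\<lambda>f. eps x * dxdy n (fst x) (snd x) f)"
    by metis
  have tauL: "\<tau> = (\<lambda>f. \<Sum>x\<in>Idx n k. (c2 x * eps x) * dxdy n (fst x) (snd x) f)"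
  proof
    fix f
    have "\<tau> f = (\<Sum>x\<in>Idx n k. c2 x * e x f)"
      unfolding \<tau>_def
    proof (rule sum.mono_neutral_right[OF finite_PP Idx_PP])
      show "\<forall>x\<in>PP n - Idx n k. c2 x * e x f = 0" using supp by auto
    qed
    also have "\<dots> = (\<Sum>x\<in>Idx n k. (c2 x * eps x) * dxdy n (fst x) (snd x) f)"
      by (intro sum.cong refl) (simp add: eps)
    finally show "\<tau> f = (\<Sum>x\<in>Idx n k. (c2 x * eps x) * dxdy n (fst x) (snd x) f)" .
  qed
  have inL: "\<tau> \<in> Lambda n k" unfolding Lambda_Idx using tauL
    by (intro CollectI exI[of _ "\<lambda>x. c2 x * eps x"]) simp
  have wz: "wedge 2 n (omega_s n) \<tau> f = 0" for f
  proof -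
    define E where "E A B = basic_form (2 + n) (il n A B) f" for A B
    have om: "omega_s n = (\<lambda>g. \<Sum>i<n. basic_form 2 [i, n + i] g)" by (rule ext) (rule omega_decomp)
    have "wedge 2 n (omega_s n) \<tau> f = (\<Sum>i<n. \<Sum>x\<in>PP n. c2 x * wedge 2 n (basic_form 2 [i, n + i]) (e x) f)"
      unfolding om \<tau>_def by (rule wedge_lin)
    also have "\<dots> = (\<Sum>i<n. \<Sum>x\<in>PP n. c2 x * basic_form (2 + n) (i # (n + i) # il n (fst x) (snd x)) f)"
      by (intro sum.cong refl) (simp add: e_def wedge_bf)
    also have "\<dots> = (\<Sum>x\<in>PP n. c2 x * (\<Sum>i<n. basic_form (2 + n) (i # (n + i) # il n (fst x) (snd x)) f))"
      by (subst sum.swap) (simp add: sum_distrib_left)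
    also have "\<dots> = (\<Sum>x\<in>PP n. c2 x * (\<Sum>i\<in>{..<n} - (fst x \<union> snd x). E (insert i (fst x)) (insert i (snd x))))"
    proof (intro sum.cong refl)
      fix x assume xP: "x \<in> PP n"
      show "c2 x * (\<Sum>i<n. basic_form (2 + n) (i # (n + i) # il n (fst x) (snd x)) f)
          = c2 x * (\<Sum>i\<in>{..<n} - (fst x \<union> snd x). E (insert i (fst x)) (insert i (snd x)))"
      proof (cases "c2 x = 0")
        case False
        note f = Idx_facts[OF supp[OF False] kn]
        have "(\<Sum>i<n. basic_form (2 + n) (i # (n + i) # il n (fst x) (snd x)) f)
            = (\<Sum>i<n. if i \<in> fst x \<or> i \<in> snd x then 0 else E (insert i (fst x)) (insert i (snd x)))"
          by (intro sum.cong refl) (use f in \<open>simp add: bf_il_insert E_def\<close>)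
        also have "\<dots> = (\<Sum>i\<in>{..<n} - (fst x \<union> snd x). E (insert i (fst x)) (insert i (snd x)))"
          by (rule sum_restrict_notin[OF f(1,2)])
        finally show ?thesis by simp
      qed simp
    qed
    also have "\<dots> = (\<Sum>x\<in>PP n. \<Sum>i\<in>{..<n} - (fst x \<union> snd x).
        c2 (insert i (fst x) - {i}, insert i (snd x) - {i}) * E (insert i (fst x)) (insert i (snd x)))"
    proof (intro sum.cong refl)
      fix x
      have "\<And>i. i \<in> {..<n} - (fst x \<union> snd x) \<Longrightarrow> (insert i (fst x) - {i}, insert i (snd x) - {i}) = x"
        by auto
      then show "c2 x * (\<Sum>i\<in>{..<n} - (fst x \<union> snd x). E (insert i (fst x)) (insert i (snd x)))
        = (\<Sum>i\<in>{..<n} - (fst x \<union> snd x). c2 (insert i (fst x) - {i}, insert i (snd x) - {i}) * E (insert i (fst x)) (insert i (snd x)))"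
        by (simp add: sum_distrib_left)
    qed
    also have "\<dots> = (\<Sum>x\<in>PP n. \<Sum>i\<in>fst x \<inter> snd x. c2 (fst x - {i}, snd x - {i}) * E (fst x) (snd x))"
      using reidx[where n=n and F="\<lambda>A B i. c2 (A - {i}, B - {i}) * E A B"] by simp
    also have "\<dots> = (\<Sum>x\<in>PP n. Up n c2 x * E (fst x) (snd x))"
    proof (intro sum.cong refl)
      fix x assume "x \<in> PP n"
      then show "(\<Sum>i\<in>fst x \<inter> snd x. c2 (fst x - {i}, snd x - {i}) * E (fst x) (snd x)) = Up n c2 x * E (fst x) (snd x)"
        using PP_facts by (simp add: Up_def sum_distrib_right)
    qed
    also have "\<dots> = 0" using c2(2) by simp
    finally show ?thesis .
  qed
  have inP: "\<tau> \<in> PLambda n k" using inL wz by (simp add: PLambda_def)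
  have QQ: "Q_tau n k \<tau> = Q"
  proof
    fix W
    have "Q_tau n k \<tau> W = (\<Sum>x\<in>PP n. c2 x * Q_tau n k (e x) W)"
      unfolding \<tau>_def by (rule Q_tau_lin[OF finite_PP])
    also have "\<dots> = (\<Sum>x\<in>PP n. d x * Q_tau n k (e x) W) + (\<Sum>x\<in>PP n. Up n \<sigma> x * Q_tau n k (e x) W)"
      by (subst c2(3)) (simp add: sum.distrib distrib_right)
    also have "(\<Sum>x\<in>PP n. Up n \<sigma> x * Q_tau n k (e x) W) = 0"
    proof -
      have "(\<Sum>x\<in>PP n. Up n \<sigma> x * Q_tau n k (e x) W)
          = (\<Sum>x\<in>PP n. \<Sum>i\<in>fst x \<inter> snd x. \<sigma> (fst x - {i}, snd x - {i}) * Q_tau n k (e x) W)"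
        by (intro sum.cong refl) (use PP_facts in \<open>simp add: Up_def sum_distrib_right\<close>)
      also have "\<dots> = (\<Sum>x\<in>PP n. \<Sum>i\<in>{..<n} - (fst x \<union> snd x).
          \<sigma> (insert i (fst x) - {i}, insert i (snd x) - {i}) * Q_tau n k (e (insert i (fst x), insert i (snd x))) W)"
        using reidx[where n=n and F="\<lambda>A B i. \<sigma> (A - {i}, B - {i}) * Q_tau n k (e (A, B)) W"] by simp
      also have "\<dots> = (\<Sum>x\<in>PP n. \<sigma> x * (\<Sum>i\<in>{..<n} - (fst x \<union> snd x). Q_tau n k (e (insert i (fst x), insert i (snd x))) W))"
      proof (intro sum.cong refl)
        fix x
        have "\<And>i. i \<in> {..<n} - (fst x \<union> snd x) \<Longrightarrow> (insert i (fst x) - {i}, insert i (snd x) - {i}) = x"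
          by auto
        then show "(\<Sum>i\<in>{..<n} - (fst x \<union> snd x). \<sigma> (insert i (fst x) - {i}, insert i (snd x) - {i}) * Q_tau n k (e (insert i (fst x), insert i (snd x))) W)
          = \<sigma> x * (\<Sum>i\<in>{..<n} - (fst x \<union> snd x). Q_tau n k (e (insert i (fst x), insert i (snd x))) W)"
          by (simp add: sum_distrib_left)
      qed
      also have "\<dots> = 0"
      proof (rule sum.neutral, rule ballI)
        fix x assume xP: "x \<in> PP n"
        show "\<sigma> x * (\<Sum>i\<in>{..<n} - (fst x \<union> snd x). Q_tau n k (e (insert i (fst x), insert i (snd x))) W) = 0"
        proof (cases "\<sigma> x = 0")
          case False
          note f = supps[OF False]
          have n2: "2 \<le> n" using f by linarith
          have "(\<Sum>i\<in>{..<n} - (fst x \<union> snd x). Q_tau n k (e (insert i (fst x), insert i (snd x))) W)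
              = (\<Sum>i\<in>{..<n} - (fst x \<union> snd x). 1 * Q_tau n k (basic_form n (il n (insert i (fst x)) (insert i (snd x)))) W)"
            by (simp add: e_def)
          also have "\<dots> = Q_tau n k (\<lambda>g. \<Sum>i\<in>{..<n} - (fst x \<union> snd x). 1 * basic_form n (il n (insert i (fst x)) (insert i (snd x))) g) W"
            by (rule Q_tau_lin[symmetric]) simp
          also have "(\<lambda>g. \<Sum>i\<in>{..<n} - (fst x \<union> snd x). 1 * basic_form n (il n (insert i (fst x)) (insert i (snd x))) g)
              = (\<lambda>g. \<Sum>i<n. basic_form n (i # (n + i) # il n (fst x) (snd x)) g)"
          proof
            fix g
            have "(\<Sum>i<n. basic_form n (i # (n + i) # il n (fst x) (snd x)) g)
                = (\<Sum>i<n. if i \<in> fst x \<or> i \<in> snd x then 0 else basic_form n (il n (insert i (fst x)) (insert i (snd x))) g)"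
              by (intro sum.cong refl) (use f in \<open>simp add: bf_il_insert\<close>)
            also have "\<dots> = (\<Sum>i\<in>{..<n} - (fst x \<union> snd x). basic_form n (il n (insert i (fst x)) (insert i (snd x))) g)"
              using f by (intro sum_restrict_notin) auto
            finally show "(\<Sum>i\<in>{..<n} - (fst x \<union> snd x). 1 * basic_form n (il n (insert i (fst x)) (insert i (snd x))) g)
                = (\<Sum>i<n. basic_form n (i # (n + i) # il n (fst x) (snd x)) g)" by simp
          qed
          also have "Q_tau n k \<dots> W = 0" by (rule Q_kernel[OF n2])
          finally show ?thesis by simp
        qed simp
      qed
      finally show ?thesis .
    qed
    also have "(\<Sum>x\<in>PP n. d x * Q_tau n k (e x) W) = (\<Sum>x\<in>Idx n k. d x * Q_tau n k (e x) W)"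
      by (rule sum.mono_neutral_right[OF finite_PP Idx_PP]) (auto simp: d_def)
    also have "\<dots> = (\<Sum>x\<in>Idx n k. (\<lambda>y. c y * minor k W (fst y) * minor k W (snd y)) (comp n (fst x), snd x))"
    proof (intro sum.cong refl)
      fix x assume xi: "x \<in> Idx n k"
      note f = Idx_facts[OF xi kn]
      have "Q_tau n k (e x) W = Ce n (fst x) (snd x) * minor k W (comp n (fst x)) * minor k W (snd x)"
        unfolding e_def by (rule Q_il[OF f(1,2,3,4)])
      moreover have "Ce n (fst x) (snd x) \<noteq> 0" by (rule Ce_nz[OF f(1,2,3,4)])
      ultimately show "d x * Q_tau n k (e x) W = (\<lambda>y. c y * minor k W (fst y) * minor k W (snd y)) (comp n (fst x), snd x)"
        using xi by (simp add: d_def)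
    qed
    also have "\<dots> = (\<Sum>y\<in>Idx2 n k. c y * minor k W (fst y) * minor k W (snd y))"
      by (rule sum.reindex_bij_betw[OF Idx_bij[OF kn]])
    finally show "Q_tau n k \<tau> W = Q W" unfolding Q by simp
  qed
  show ?thesis using inP QQ by blast
qed

theorem proposition6p15:
  fixes n k :: nat
  assumes "1 \<le> k" and "k \<le> n"
  shows "Q_tau n k ` PLambda n k = M2 n k"
proof
  show "Q_tau n k ` PLambda n k \<subseteq> M2 n k" using sub_dir[OF assms(2)] by blast
  show "M2 n k \<subseteq> Q_tau n k ` PLambda n k" using sup_dir[OF assms] by blast
qed


end
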